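(* Let $F$ be a field and $R$ a von Neumann regular ring which is an $F$-algebra. Let $M$ be a right $R$-module with $\dim_F M\le\aleph_0$ and let $I=\mathrm{Ann}_R(M)$. The following are equivalent: (1) $R/I$ is Artinian; (2) $M$ is $\Sigma$-$\aleph_0$-injective; (3) $M$ is $\aleph_0$-injective.
   Context: A right $R$-module $N$ is $\aleph_0$-injective if every $R$-homomorphism from a countably generated right ideal of $R$ into $N$ extends to $R$. $M$ is $\Sigma$-$\aleph_0$-injective if the direct sum $M^{(\Lambda)}$ of $\Lambda$ copies of $M$ is $\aleph_0$-injective for every index set $\Lambda$. $\mathrm{Ann}_R(M)=\{r\in R: Mr=0\}$; $M$ is an $F$-vector space via the algebra structure. *)

theory Defs
  imports "HOL-Algebra.QuotRing" "HOL-Library.Countable_Set" "HOL-Library.Function_Algebras"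
begin

definition ring_of_type :: "('r::ring_1) ring" where
  "ring_of_type = \<lparr>carrier = UNIV, mult = (*), one = 1, zero = 0, add = (+)\<rparr>"

definition right_ideal_of :: "('a, 'b) ring_scheme \<Rightarrow> 'a set \<Rightarrow> bool" where
  "right_ideal_of A K \<longleftrightarrow>
     K \<subseteq> carrier A \<and> \<zero>\<^bsub>A\<^esub> \<in> K \<and>
     (\<forall>x\<in>K. \<forall>y\<in>K. x \<oplus>\<^bsub>A\<^esub> y \<in> K) \<and>
     (\<forall>x\<in>K. \<ominus>\<^bsub>A\<^esub> x \<in> K) \<and>
     (\<forall>x\<in>K. \<forall>r\<in>carrier A. x \<otimes>\<^bsub>A\<^esub> r \<in> K)"

definition right_artinian :: "('a, 'b) ring_scheme \<Rightarrow> bool" where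
  "right_artinian A \<longleftrightarrow>
     (\<forall>K :: nat \<Rightarrow> 'a set.
        (\<forall>n. right_ideal_of A (K n) \<and> K (Suc n) \<subseteq> K n) \<longrightarrow>
        (\<exists>N. \<forall>n\<ge>N. K n = K N))"

definition right_ideal_gen :: "('r::ring_1) set \<Rightarrow> 'r set" where
  "right_ideal_gen G = \<Inter>{K. right_ideal_of (ring_of_type :: 'r ring) K \<and> G \<subseteq> K}"

definition countably_generated_right_ideal :: "('r::ring_1) set \<Rightarrow> bool" where
  "countably_generated_right_ideal J \<longleftrightarrow>
     right_ideal_of (ring_of_type :: 'r ring) J \<and>
     (\<exists>G. countable G \<and> G \<subseteq> J \<and> J = right_ideal_gen G)"

definition right_module :: "('m::ab_group_add) set \<Rightarrow> ('m \<Rightarrow> 'r::ring_1 \<Rightarrow> 'm) \<Rightarrow> bool" where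
  "right_module N act \<longleftrightarrow>
     0 \<in> N \<and> (\<forall>x\<in>N. \<forall>y\<in>N. x + y \<in> N) \<and> (\<forall>x\<in>N. - x \<in> N) \<and>
     (\<forall>x\<in>N. \<forall>r. act x r \<in> N) \<and>
     (\<forall>x\<in>N. \<forall>y\<in>N. \<forall>r. act (x + y) r = act x r + act y r) \<and>
     (\<forall>x\<in>N. \<forall>r s. act x (r + s) = act x r + act x s) \<and>
     (\<forall>x\<in>N. \<forall>r s. act x (r * s) = act (act x r) s) \<and>
     (\<forall>x\<in>N. act x 1 = x)"

definition rmod_hom ::
  "('a::ab_group_add) set \<Rightarrow> ('a \<Rightarrow> 'r::ring_1 \<Rightarrow> 'a) \<Rightarrow>
   ('b::ab_group_add) set \<Rightarrow> ('b \<Rightarrow> 'r \<Rightarrow> 'b) \<Rightarrow> ('a \<Rightarrow> 'b) \<Rightarrow> bool" where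
  "rmod_hom A actA B actB h \<longleftrightarrow>
     (\<forall>x\<in>A. h x \<in> B) \<and>
     (\<forall>x\<in>A. \<forall>y\<in>A. h (x + y) = h x + h y) \<and>
     (\<forall>x\<in>A. \<forall>r. h (actA x r) = actB (h x) r)"

definition aleph0_injective :: "('m::ab_group_add) set \<Rightarrow> ('m \<Rightarrow> 'r::ring_1 \<Rightarrow> 'm) \<Rightarrow> bool" where
  "aleph0_injective N act \<longleftrightarrow>
     (\<forall>(J :: 'r set) h.
        countably_generated_right_ideal J \<and> rmod_hom J (*) N act h \<longrightarrow>
        (\<exists>g. rmod_hom (UNIV :: 'r set) (*) N act g \<and> (\<forall>x\<in>J. g x = h x)))"

definition dsum :: "'i set \<Rightarrow> ('m::ab_group_add) set \<Rightarrow> ('i \<Rightarrow> 'm) set" where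
  "dsum \<Lambda> N = {f. (\<forall>i. f i \<in> N) \<and> (\<forall>i. i \<notin> \<Lambda> \<longrightarrow> f i = 0) \<and> finite {i. f i \<noteq> 0}}"

definition dsum_act :: "('m \<Rightarrow> 'r \<Rightarrow> 'm) \<Rightarrow> ('i \<Rightarrow> 'm) \<Rightarrow> 'r \<Rightarrow> ('i \<Rightarrow> 'm)" where
  "dsum_act act f r = (\<lambda>i. act (f i) r)"

definition Ann :: "('m::ab_group_add) set \<Rightarrow> ('m \<Rightarrow> 'r::ring_1 \<Rightarrow> 'm) \<Rightarrow> 'r set" where
  "Ann N act = {r. \<forall>m\<in>N. act m r = 0}"

definition F_algebra :: "('f::field \<Rightarrow> 'r::ring_1) \<Rightarrow> bool" where
  "F_algebra \<phi> \<longleftrightarrow>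
     \<phi> 1 = 1 \<and> (\<forall>a b. \<phi> (a + b) = \<phi> a + \<phi> b) \<and> (\<forall>a b. \<phi> (a * b) = \<phi> a * \<phi> b) \<and>
     (\<forall>c r. \<phi> c * r = r * \<phi> c)"

definition von_neumann_regular :: "'r::ring_1 itself \<Rightarrow> bool" where
  "von_neumann_regular _ \<longleftrightarrow> (\<forall>a::'r. \<exists>x. a = a * x * a)"

definition F_lin_indep :: "('f::field \<Rightarrow> 'r::ring_1) \<Rightarrow> ('m::ab_group_add \<Rightarrow> 'r \<Rightarrow> 'm) \<Rightarrow> 'm set \<Rightarrow> bool" where
  "F_lin_indep \<phi> act B \<longleftrightarrow>
     (\<forall>S c. finite S \<and> S \<subseteq> B \<and> (\<Sum>b\<in>S. act b (\<phi> (c b))) = 0 \<longrightarrow> (\<forall>b\<in>S. c b = 0))"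

definition F_span :: "('f::field \<Rightarrow> 'r::ring_1) \<Rightarrow> ('m::ab_group_add \<Rightarrow> 'r \<Rightarrow> 'm) \<Rightarrow> 'm set \<Rightarrow> 'm set" where
  "F_span \<phi> act B = {\<Sum>b\<in>S. act b (\<phi> (c b)) | S c. finite S \<and> S \<subseteq> B}"

definition F_dim_le_aleph0 :: "('f::field \<Rightarrow> 'r::ring_1) \<Rightarrow> 'm::ab_group_add set \<Rightarrow> ('m \<Rightarrow> 'r \<Rightarrow> 'm) \<Rightarrow> bool" where
  "F_dim_le_aleph0 \<phi> N act \<longleftrightarrow>
     (\<exists>B. B \<subseteq> N \<and> countable B \<and> F_lin_indep \<phi> act B \<and> F_span \<phi> act B = N)"

end

theory Submission
  imports Defs Complex_Main
begin


lemma rot_simps[simp]: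
  "carrier (ring_of_type::'r::ring_1 ring) = UNIV"
  "add (ring_of_type::'r::ring_1 ring) = (+)"
  "mult (ring_of_type::'r::ring_1 ring) = (*)"
  "one (ring_of_type::'r::ring_1 ring) = 1"
  "zero (ring_of_type::'r::ring_1 ring) = 0"
  by (simp_all add: ring_of_type_def)

lemma ring_rot: "ring (ring_of_type::'r::ring_1 ring)"
  apply (rule ringI)
     apply (rule abelian_groupI)
          apply (auto simp: algebra_simps)
   apply (metis add.commute neg_eq_iff_add_eq_0)
  apply (rule monoidI)
      apply (auto simp: algebra_simps)
  done

lemma rot_ainv[simp]: "a_inv (ring_of_type::'r::ring_1 ring) x = - x"
proof -
  interpret ring "ring_of_type::'r ring" by (rule ring_rot)
  show ?thesis by (rule add.inv_equality) auto
qed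

lemma rot_minus[simp]: "a_minus (ring_of_type::'r::ring_1 ring) x y = x - y"
  by (simp add: a_minus_def)

definition rid :: "'r::ring_1 set \<Rightarrow> bool" where
  "rid L \<longleftrightarrow> 0 \<in> L \<and> (\<forall>x\<in>L. \<forall>y\<in>L. x + y \<in> L) \<and> (\<forall>x\<in>L. - x \<in> L) \<and> (\<forall>x\<in>L. \<forall>r. x * r \<in> L)"

lemma right_ideal_rot: "right_ideal_of (ring_of_type::'r::ring_1 ring) L \<longleftrightarrow> rid L"
  by (simp add: right_ideal_of_def rid_def)

lemma rid_diff: "rid L \<Longrightarrow> x \<in> L \<Longrightarrow> y \<in> L \<Longrightarrow> x - y \<in> L"
  unfolding rid_def by (metis diff_conv_add_uminus)

lemma rm_mult: "right_module M act \<Longrightarrow> x \<in> M \<Longrightarrow> act x (r*s) = act (act x r) s"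
  and rm_closed: "right_module M act \<Longrightarrow> x \<in> M \<Longrightarrow> act x r \<in> M"
  and rm_radd: "right_module M act \<Longrightarrow> x \<in> M \<Longrightarrow> act x (r+s) = act x r + act x s"
  and rm_ladd: "right_module M act \<Longrightarrow> x \<in> M \<Longrightarrow> y \<in> M \<Longrightarrow> act (x+y) r = act x r + act y r"
  and rm_one: "right_module M act \<Longrightarrow> x \<in> M \<Longrightarrow> act x 1 = x"
  and rm_add_closed: "right_module M act \<Longrightarrow> x \<in> M \<Longrightarrow> y \<in> M \<Longrightarrow> x + y \<in> M"
  and rm_neg_closed: "right_module M act \<Longrightarrow> x \<in> M \<Longrightarrow> - x \<in> M"
  and rm_zero_closed: "right_module M act \<Longrightarrow> 0 \<in> M"
  unfolding right_module_def by auto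

lemma rm_r0: "right_module M act \<Longrightarrow> x \<in> M \<Longrightarrow> act x 0 = 0"
proof -
  assume a: "right_module M act" "x \<in> M"
  have "act x 0 + act x 0 = act x 0 + 0" using rm_radd[OF a, of 0 0] by simp
  thus ?thesis by simp
qed

lemma rm_rneg: "right_module M act \<Longrightarrow> x \<in> M \<Longrightarrow> act x (- r) = - act x r"
proof -
  assume a: "right_module M act" "x \<in> M"
  have "act x r + act x (- r) = 0" using rm_radd[OF a, of r "-r"] rm_r0[OF a] by simp
  thus ?thesis by (simp add: eq_neg_iff_add_eq_0 add.commute)
qed

lemma rm_rdiff: "right_module M act \<Longrightarrow> x \<in> M \<Longrightarrow> act x (r - s) = act x r - act x s"
  using rm_radd[of M act x r "-s"] rm_rneg[of M act x s] by (simp add: diff_conv_add_uminus del: add_uminus_conv_diff)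

lemma rm_l0: "right_module M act \<Longrightarrow> act 0 r = 0"
proof -
  assume a: "right_module M act"
  have "act 0 r + act 0 r = act 0 r + 0" using rm_ladd[OF a rm_zero_closed[OF a] rm_zero_closed[OF a], of r] by simp
  thus ?thesis by simp
qed

lemma rm_lneg: "right_module M act \<Longrightarrow> x \<in> M \<Longrightarrow> act (- x) r = - act x r"
proof -
  assume a: "right_module M act" "x \<in> M"
  have "act x r + act (- x) r = 0" using rm_ladd[OF a(1) a(2) rm_neg_closed[OF a], of r] rm_l0[OF a(1)] by simp
  thus ?thesis by (simp add: eq_neg_iff_add_eq_0 add.commute)
qed

lemma rm_ldiff: "right_module M act \<Longrightarrow> x \<in> M \<Longrightarrow> y \<in> M \<Longrightarrow> act (x - y) r = act x r - act y r"
  using rm_ladd[of M act x "-y" r] rm_lneg[of M act y r] rm_neg_closed[of M act y] by (simp add: diff_conv_add_uminus del: add_uminus_conv_diff)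

lemma rm_diff_closed: "right_module M act \<Longrightarrow> x \<in> M \<Longrightarrow> y \<in> M \<Longrightarrow> x - y \<in> M"
  using rm_add_closed[of M act x "-y"] rm_neg_closed[of M act y] by (simp add: diff_conv_add_uminus del: add_uminus_conv_diff)

lemma Ann_ideal:
  assumes mod: "right_module M act"
  shows "ideal (Ann M act) (ring_of_type::'r::ring_1 ring)"
proof (rule idealI[OF ring_rot])
  show "subgroup (Ann M act) (add_monoid (ring_of_type::'r ring))"
  proof (rule group.subgroupI)
    show "group (add_monoid (ring_of_type::'r ring))" using ring.is_abelian_group[OF ring_rot] abelian_group.a_group by blast
    fix a assume "a \<in> Ann M act"
    thus "inv\<^bsub>add_monoid (ring_of_type::'r ring)\<^esub> a \<in> Ann M act"
      unfolding rot_ainv[of a, unfolded a_inv_def] by (simp add: Ann_def rm_rneg[OF mod])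
  next
    show "Ann M act \<noteq> {}" using rm_r0[OF mod] by (auto simp: Ann_def)
  qed (auto simp: Ann_def rm_radd[OF mod])
qed (auto simp: Ann_def rm_mult[OF mod] rm_closed[OF mod] rm_l0[OF mod])


lemma quot_basic:
  assumes I: "ideal I (ring_of_type::'r::ring_1 ring)"
  defines "Q \<equiv> (ring_of_type::'r ring) Quot I"
  defines "p \<equiv> \<lambda>r. I +>\<^bsub>(ring_of_type::'r ring)\<^esub> r"
  shows "carrier Q = range p"
    and "\<And>x y. p (x + y) = p x \<oplus>\<^bsub>Q\<^esub> p y"
    and "\<And>x y. p (x * y) = p x \<otimes>\<^bsub>Q\<^esub> p y"
    and "\<zero>\<^bsub>Q\<^esub> = p 0"
    and "\<And>x. \<ominus>\<^bsub>Q\<^esub> (p x) = p (- x)"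
    and "\<And>x y. p x = p y \<longleftrightarrow> x - y \<in> I"
    and "ring Q"
proof -
  interpret ideal I "ring_of_type::'r ring" by (rule I)
  have hom: "ring_hom_ring (ring_of_type::'r ring) Q p" unfolding Q_def p_def by (rule rcos_ring_hom_ring)
  interpret h: ring_hom_ring "ring_of_type::'r ring" Q p by (rule hom)
  show "carrier Q = range p" unfolding Q_def p_def FactRing_def A_RCOSETS_def' by auto
  show "\<And>x y. p (x + y) = p x \<oplus>\<^bsub>Q\<^esub> p y" using h.hom_add by auto
  show "\<And>x y. p (x * y) = p x \<otimes>\<^bsub>Q\<^esub> p y" using h.hom_mult by auto
  show z: "\<zero>\<^bsub>Q\<^esub> = p 0" using h.hom_zero by auto
  show "ring Q" unfolding Q_def by (rule quotient_is_ring)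
  show "\<And>x. \<ominus>\<^bsub>Q\<^esub> (p x) = p (- x)"
  proof -
    fix x
    have "p (- x) \<oplus>\<^bsub>Q\<^esub> p x = \<zero>\<^bsub>Q\<^esub>" using h.hom_add[of "-x" x] z by simp
    moreover have "p x \<in> carrier Q" "p (-x) \<in> carrier Q" using h.hom_closed by auto
    ultimately show "\<ominus>\<^bsub>Q\<^esub> (p x) = p (- x)" using h.S.add.inv_equality by blast
  qed
  have pI: "\<And>z. p z = p 0 \<longleftrightarrow> z \<in> I"
  proof -
    fix z
    have "\<zero>\<^bsub>(ring_of_type::'r ring)\<^esub> \<in> I" using additive_subgroup.zero_closed[OF ideal.axioms(1)[OF I]] .
    hence "(0::'r) \<in> I" by simp
    hence p0: "p 0 = I" unfolding p_def using a_rcos_const[of 0] by simp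
    show "p z = p 0 \<longleftrightarrow> z \<in> I"
    proof
      assume "p z = p 0" thus "z \<in> I" using a_rcos_self[of z] p0 unfolding p_def by simp
    next
      assume "z \<in> I" thus "p z = p 0" using p0 a_rcos_const unfolding p_def by simp
    qed
  qed
  show "\<And>x y. p x = p y \<longleftrightarrow> x - y \<in> I"
  proof -
    fix x y
    have "p (x - y) = p x \<oplus>\<^bsub>Q\<^esub> \<ominus>\<^bsub>Q\<^esub> (p y)" using h.hom_add[of x "-y"] h.hom_a_inv by simp
    have c: "p x \<in> carrier Q" "p y \<in> carrier Q" using h.hom_closed by auto
    show "p x = p y \<longleftrightarrow> x - y \<in> I"
    proof
      assume "p x = p y"
      hence "p (x - y) = p 0" using h.hom_add[of x "-y"] h.hom_a_inv[of y] c z h.S.r_neg by simp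
      thus "x - y \<in> I" using pI by blast
    next
      assume "x - y \<in> I"
      hence e: "p (x - y) = p 0" using pI by blast
      have "p x = p ((x - y) + y)" by simp
      also have "\<dots> = p (x - y) \<oplus>\<^bsub>Q\<^esub> p y" using h.hom_add[of "x - y" y] by simp
      also have "\<dots> = p y" using e z c h.S.l_zero by simp
      finally show "p x = p y" .
    qed
  qed
qed

definition dcc_over :: "'r::ring_1 set \<Rightarrow> bool" where
  "dcc_over I \<longleftrightarrow> (\<forall>L::nat \<Rightarrow> 'r set. (\<forall>n. rid (L n) \<and> I \<subseteq> L n \<and> L (Suc n) \<subseteq> L n) \<longrightarrow> (\<exists>N. \<forall>n\<ge>N. L n = L N))"

lemma artinian_iff:
  assumes I: "ideal I (ring_of_type::'r::ring_1 ring)"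
  shows "right_artinian ((ring_of_type::'r ring) Quot I) \<longleftrightarrow> dcc_over I"
proof -
  define Q where "Q = (ring_of_type::'r ring) Quot I"
  define p where "p = (\<lambda>r. I +>\<^bsub>(ring_of_type::'r ring)\<^esub> r)"
  note qb = quot_basic[OF I, folded Q_def p_def]
  have Isub: "\<And>x y. x - y \<in> I \<Longrightarrow> y \<in> I \<Longrightarrow> x \<in> I"
    using I by (metis UNIV_I add.commute diff_add_cancel ideal.axioms(1) additive_subgroup.a_closed rot_simps(1,2))
  have img: "\<And>L. rid L \<Longrightarrow> I \<subseteq> L \<Longrightarrow> right_ideal_of Q (p ` L) \<and> (\<forall>r. p r \<in> p ` L \<longleftrightarrow> r \<in> L)"
  proof -
    fix L :: "'r set" assume L: "rid L" "I \<subseteq> L"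
    have mem: "\<forall>r. p r \<in> p ` L \<longleftrightarrow> r \<in> L"
    proof (intro allI iffI)
      fix r assume "p r \<in> p ` L"
      then obtain l where l: "l \<in> L" "p r = p l" by auto
      hence "r - l \<in> I" using qb(6) by blast
      hence "r - l \<in> L" using L by auto
      hence "(r - l) + l \<in> L" using L l unfolding rid_def by blast
      thus "r \<in> L" by simp
    qed auto
    have "right_ideal_of Q (p ` L)"
      unfolding right_ideal_of_def
    proof (intro conjI ballI)
      show "p ` L \<subseteq> carrier Q" using qb(1) by auto
      show "\<zero>\<^bsub>Q\<^esub> \<in> p ` L" using qb(4) L unfolding rid_def by auto
      fix x assume "x \<in> p ` L"
      then obtain a where a: "a \<in> L" "x = p a" by auto
      show "\<ominus>\<^bsub>Q\<^esub> x \<in> p ` L" using a qb(5) L unfolding rid_def by auto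
      { fix y assume "y \<in> p ` L"
        then obtain b where b: "b \<in> L" "y = p b" by auto
        show "x \<oplus>\<^bsub>Q\<^esub> y \<in> p ` L" using a b qb(2)[of a b, symmetric] L unfolding rid_def by auto }
      { fix r assume "r \<in> carrier Q"
        then obtain s where "r = p s" using qb(1) by auto
        thus "x \<otimes>\<^bsub>Q\<^esub> r \<in> p ` L" using a qb(3)[of a s, symmetric] L unfolding rid_def by auto }
    qed
    with mem show "right_ideal_of Q (p ` L) \<and> (\<forall>r. p r \<in> p ` L \<longleftrightarrow> r \<in> L)" by blast
  qed
  have pre: "\<And>K. right_ideal_of Q K \<Longrightarrow> rid {r. p r \<in> K} \<and> I \<subseteq> {r. p r \<in> K} \<and> K = p ` {r. p r \<in> K}"
  proof -
    fix K assume K: "right_ideal_of Q K"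
    have z: "p 0 \<in> K" using K qb(4) unfolding right_ideal_of_def by auto
    have "rid {r. p r \<in> K}" unfolding rid_def
    proof (intro conjI ballI allI)
      show "0 \<in> {r. p r \<in> K}" using z by simp
      fix x assume x: "x \<in> {r. p r \<in> K}"
      show "- x \<in> {r. p r \<in> K}" using x K qb(5)[of x] unfolding right_ideal_of_def by auto
      { fix y assume "y \<in> {r. p r \<in> K}"
        thus "x + y \<in> {r. p r \<in> K}" using x K qb(2)[of x y] unfolding right_ideal_of_def by auto }
      { fix r show "x * r \<in> {r. p r \<in> K}" using x K qb(3)[of x r] qb(1) unfolding right_ideal_of_def by auto }
    qed
    moreover have "I \<subseteq> {r. p r \<in> K}"
    proof
      fix i assume "i \<in> I" hence "p i = p 0" using qb(6) by simp
      thus "i \<in> {r. p r \<in> K}" using z by simp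
    qed
    moreover have "K = p ` {r. p r \<in> K}" using K qb(1) unfolding right_ideal_of_def by auto
    ultimately show "rid {r. p r \<in> K} \<and> I \<subseteq> {r. p r \<in> K} \<and> K = p ` {r. p r \<in> K}" by blast
  qed
  show ?thesis
  proof
    assume art: "right_artinian ((ring_of_type::'r ring) Quot I)"
    show "dcc_over I" unfolding dcc_over_def
    proof (intro allI impI)
      fix L :: "nat \<Rightarrow> 'r set" assume L: "\<forall>n. rid (L n) \<and> I \<subseteq> L n \<and> L (Suc n) \<subseteq> L n"
      have "\<forall>n. right_ideal_of Q (p ` L n) \<and> p ` L (Suc n) \<subseteq> p ` L n"
      proof (intro allI conjI)
        fix n have Ln: "rid (L n)" "I \<subseteq> L n" using L by auto
        show "right_ideal_of Q (p ` L n)" using img[OF Ln] by blast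
        show "p ` L (Suc n) \<subseteq> p ` L n" using L by (simp add: image_mono)
      qed
      note H = this
      have art': "\<forall>K :: nat \<Rightarrow> 'r set set. (\<forall>n. right_ideal_of Q (K n) \<and> K (Suc n) \<subseteq> K n) \<longrightarrow> (\<exists>N. \<forall>n\<ge>N. K n = K N)"
        using art unfolding right_artinian_def Q_def[symmetric] .
      have ex: "\<exists>N. \<forall>n\<ge>N. p ` L n = p ` L N" using mp[OF spec[OF art', of "\<lambda>n. p ` L n"] H] by simp
      from ex obtain N where N: "\<forall>n\<ge>N. p ` L n = p ` L N" ..
      have "\<forall>n\<ge>N. L n = L N"
      proof (intro allI impI)
        fix n assume "n \<ge> N"
        hence e: "p ` L n = p ` L N" by (rule N[rule_format])
        show "L n = L N"
        proof (rule Set.set_eqI)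
          fix r
          have Ln: "rid (L n)" "I \<subseteq> L n" "rid (L N)" "I \<subseteq> L N" using L by auto
          have a: "p r \<in> p ` L n \<longleftrightarrow> r \<in> L n" using img[OF Ln(1,2)] by blast
          have b: "p r \<in> p ` L N \<longleftrightarrow> r \<in> L N" using img[OF Ln(3,4)] by blast
          show "r \<in> L n \<longleftrightarrow> r \<in> L N" using a b e by simp
        qed
      qed
      thus "\<exists>N. \<forall>n\<ge>N. L n = L N" by blast
    qed
  next
    assume dcc: "dcc_over I"
    show "right_artinian ((ring_of_type::'r ring) Quot I)" unfolding right_artinian_def Q_def[symmetric]
    proof (intro allI impI)
      fix K :: "nat \<Rightarrow> 'r set set" assume K: "\<forall>n. right_ideal_of Q (K n) \<and> K (Suc n) \<subseteq> K n"
      define L where "L n = {r. p r \<in> K n}" for n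
      have "\<forall>n. rid (L n) \<and> I \<subseteq> L n \<and> L (Suc n) \<subseteq> L n"
      proof
        fix n
        have "right_ideal_of Q (K n)" "K (Suc n) \<subseteq> K n" using K by auto
        thus "rid (L n) \<and> I \<subseteq> L n \<and> L (Suc n) \<subseteq> L n" using pre[of "K n"] unfolding L_def by auto
      qed
      note H = this
      have ex: "\<exists>N. \<forall>n\<ge>N. L n = L N" using mp[OF spec[OF dcc[unfolded dcc_over_def], of L] H] by simp
      from ex obtain N where N: "\<forall>n\<ge>N. L n = L N" ..
      have "\<forall>n\<ge>N. K n = K N"
      proof (intro allI impI)
        fix n assume "n \<ge> N"
        hence "L n = L N" by (rule N[rule_format])
        moreover have "K n = p ` L n" "K N = p ` L N" using pre[of "K n"] pre[of "K N"] K unfolding L_def by auto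
        ultimately show "K n = K N" by simp
      qed
      thus "\<exists>N. \<forall>n\<ge>N. K n = K N" by blast
    qed
  qed
qed


lemma sum_fun_app: "(\<Sum>k\<in>t. g k) x = (\<Sum>k\<in>t. g k x)"
  by (induction t rule: infinite_finite_induct) auto

lemma rm_sum_l: "right_module M act \<Longrightarrow> (\<And>i. i \<in> S \<Longrightarrow> f i \<in> M) \<Longrightarrow> act (\<Sum>i\<in>S. f i) r = (\<Sum>i\<in>S. act (f i) r)
   \<and> (\<Sum>i\<in>S. f i) \<in> M"
proof (induction S rule: infinite_finite_induct)
  case (infinite A) thus ?case by (simp add: rm_l0 rm_zero_closed)
next
  case empty thus ?case by (simp add: rm_l0 rm_zero_closed)
next
  case (insert x F)
  have fx: "f x \<in> M" using insert by auto
  have IH: "act (\<Sum>i\<in>F. f i) r = (\<Sum>i\<in>F. act (f i) r)" "(\<Sum>i\<in>F. f i) \<in> M" using insert by auto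
  have "act (\<Sum>i\<in>insert x F. f i) r = act (f x + (\<Sum>i\<in>F. f i)) r" using insert(1,2) by simp
  also have "\<dots> = act (f x) r + act (\<Sum>i\<in>F. f i) r" by (rule rm_ladd[OF insert(4) fx IH(2)])
  also have "\<dots> = (\<Sum>i\<in>insert x F. act (f i) r)" using insert(1,2) IH(1) by simp
  finally have c1: "act (\<Sum>i\<in>insert x F. f i) r = (\<Sum>i\<in>insert x F. act (f i) r)" .
  have "(\<Sum>i\<in>insert x F. f i) = f x + (\<Sum>i\<in>F. f i)" using insert(1,2) by simp
  hence c2: "(\<Sum>i\<in>insert x F. f i) \<in> M" using rm_add_closed[OF insert(4) fx IH(2)] by simp
  show ?case using c1 c2 by blast
qed

lemma phi_0: "F_algebra \<phi> \<Longrightarrow> \<phi> 0 = 0"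
proof -
  assume a: "F_algebra \<phi>"
  have "\<phi> (0 + 0) = \<phi> 0 + \<phi> 0" using a unfolding F_algebra_def by blast
  thus ?thesis by simp
qed

lemma phi_add: "F_algebra \<phi> \<Longrightarrow> \<phi> (a + b) = \<phi> a + \<phi> b"
  and phi_mult: "F_algebra \<phi> \<Longrightarrow> \<phi> (a * b) = \<phi> a * \<phi> b"
  and phi_one: "F_algebra \<phi> \<Longrightarrow> \<phi> 1 = 1"
  and phi_central: "F_algebra \<phi> \<Longrightarrow> \<phi> c * r = r * \<phi> c"
  unfolding F_algebra_def by blast+

lemma fun_vs: "Vector_Spaces.vector_space (\<lambda>(c::'f::field) (k::'m \<Rightarrow> 'f). \<lambda>x. c * k x)"
  unfolding Vector_Spaces.vector_space_def by (auto simp: fun_eq_iff distrib_left distrib_right)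

lemma indep_countable:
  fixes \<phi> :: "'f::field \<Rightarrow> 'r::ring_1" and M :: "'m::ab_group_add set"
  assumes mod: "right_module M act" and alg: "F_algebra \<phi>" and dim: "F_dim_le_aleph0 \<phi> M act"
    and VM: "V \<subseteq> M" and ind: "F_lin_indep \<phi> act V"
  shows "countable V"
proof (rule ccontr)
  assume unc: "\<not> countable V"
  interpret vs: Vector_Spaces.vector_space "(\<lambda>(c::'f) (k::'m \<Rightarrow> 'f). \<lambda>x. c * k x)" by (rule fun_vs)
  obtain B where B: "B \<subseteq> M" "countable B" "F_span \<phi> act B = M" using dim unfolding F_dim_le_aleph0_def by blast
  have "\<forall>v\<in>V. \<exists>S c. finite S \<and> S \<subseteq> B \<and> v = (\<Sum>b\<in>S. act b (\<phi> (c b)))"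
    using VM B(3) unfolding F_span_def by blast
  from bchoice[OF this] obtain Tf where "\<forall>v\<in>V. \<exists>c. finite (Tf v) \<and> Tf v \<subseteq> B \<and> v = (\<Sum>b\<in>Tf v. act b (\<phi> (c b)))" ..
  from bchoice[OF this] obtain cf where Tc: "\<forall>v\<in>V. finite (Tf v) \<and> Tf v \<subseteq> B \<and> v = (\<Sum>b\<in>Tf v. act b (\<phi> (cf v b)))" ..
  have "V = (\<Union>T\<in>Tf ` V. {v\<in>V. Tf v = T})" by auto
  moreover have "countable (Tf ` V)"
    by (rule countable_subset[OF _ countable_Collect_finite_subset[OF B(2)]]) (use Tc in auto)
  ultimately have "\<exists>T\<in>Tf ` V. \<not> countable {v\<in>V. Tf v = T}"
  proof (rule_tac ccontr)
    assume e: "V = (\<Union>T\<in>Tf ` V. {v\<in>V. Tf v = T})" and c: "countable (Tf ` V)"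
      and n: "\<not> (\<exists>T\<in>Tf ` V. \<not> countable {v\<in>V. Tf v = T})"
    have "countable (\<Union>T\<in>Tf ` V. {v\<in>V. Tf v = T})" using c n by (intro countable_UN) auto
    thus False using e unc by simp
  qed
  then obtain T where T: "T \<in> Tf ` V" and unc2: "\<not> countable {v\<in>V. Tf v = T}" by blast
  define W where "W = {v\<in>V. Tf v = T}"
  have Tfin: "finite T" "T \<subseteq> B" using T Tc by auto
  have TM: "\<And>b. b \<in> T \<Longrightarrow> b \<in> M" using Tfin B by auto
  define \<kappa> where "\<kappa> v = (\<lambda>b. if b \<in> T then cf v b else 0)" for v
  define Fm where "Fm k = (\<Sum>b\<in>T. act b (\<phi> (k b)))" for k :: "'m \<Rightarrow> 'f"
  have WV: "W \<subseteq> V" unfolding W_def by auto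
  have Fk: "\<And>v. v \<in> W \<Longrightarrow> Fm (\<kappa> v) = v"
  proof -
    fix v assume v: "v \<in> W"
    hence v2: "v \<in> V" "Tf v = T" unfolding W_def by auto
    have "Fm (\<kappa> v) = (\<Sum>b\<in>T. act b (\<phi> (cf v b)))" unfolding Fm_def \<kappa>_def by (rule sum.cong) auto
    also have "\<dots> = v"
    proof -
      have e: "v = (\<Sum>b\<in>Tf v. act b (\<phi> (cf v b)))" using Tc v2(1) by blast
      show ?thesis using e[unfolded v2(2)] by (rule sym)
    qed
    finally show "Fm (\<kappa> v) = v" .
  qed
  have Fm_scale: "\<And>k a. act (Fm k) (\<phi> a) = Fm (\<lambda>x. a * k x)"
  proof -
    fix k a
    have "act (Fm k) (\<phi> a) = (\<Sum>b\<in>T. act (act b (\<phi> (k b))) (\<phi> a))"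
    proof -
      have cl: "\<And>b. b \<in> T \<Longrightarrow> act b (\<phi> (k b)) \<in> M" by (rule rm_closed[OF mod TM])
      show ?thesis unfolding Fm_def by (rule conjunct1[OF rm_sum_l[OF mod cl, where r="\<phi> a"]])
    qed
    also have "\<dots> = (\<Sum>b\<in>T. act b (\<phi> (a * k b)))"
    proof (rule sum.cong)
      fix b assume b: "b \<in> T"
      have "act (act b (\<phi> (k b))) (\<phi> a) = act b (\<phi> (k b) * \<phi> a)" by (rule rm_mult[OF mod TM[OF b], symmetric])
      also have "\<phi> (k b) * \<phi> a = \<phi> (a * k b)" by (simp add: phi_mult[OF alg, symmetric] mult.commute)
      finally show "act (act b (\<phi> (k b))) (\<phi> a) = act b (\<phi> (a * k b))" .
    qed simp
    finally show "act (Fm k) (\<phi> a) = Fm (\<lambda>x. a * k x)" unfolding Fm_def .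
  qed
  have Fm_add: "\<And>k1 k2. Fm (k1 + k2) = Fm k1 + Fm k2"
    unfolding Fm_def by (simp add: phi_add[OF alg] rm_radd[OF mod] TM sum.distrib)
  have Fm_0: "Fm 0 = 0" unfolding Fm_def by (simp add: phi_0[OF alg] rm_r0[OF mod] TM)
  have Fm_sum: "\<And>t g. finite t \<Longrightarrow> Fm (\<Sum>k\<in>t. g k) = (\<Sum>k\<in>t. Fm (g k))"
  proof -
    fix t :: "'x set" and g assume "finite t"
    thus "Fm (\<Sum>k\<in>t. g k) = (\<Sum>k\<in>t. Fm (g k))"
    proof (induction t rule: finite_induct)
      case empty show ?case unfolding sum.empty by (rule Fm_0)
    next
      case (insert x F)
      show ?case unfolding sum.insert[OF insert(1,2)] Fm_add insert(3) ..
    qed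
  qed
  define D where "D = (\<lambda>b. \<lambda>x. if x = b then (1::'f) else 0) ` T"
  have span: "\<kappa> ` W \<subseteq> vs.span D"
  proof
    fix k assume "k \<in> \<kappa> ` W"
    then obtain v where k: "k = \<kappa> v" by auto
    have "k = (\<Sum>b\<in>T. (\<lambda>x. k b * (if x = b then 1 else 0)))"
    proof (rule ext)
      fix x
      have "(\<Sum>b\<in>T. (\<lambda>x. k b * (if x = b then 1 else 0))) x = (\<Sum>b\<in>T. (if x = b then k b else 0))"
        unfolding sum_fun_app by (rule sum.cong) auto
      also have "\<dots> = (if x \<in> T then k x else 0)" using sum.delta[OF Tfin(1), of x k] by (simp add: eq_commute)
      also have "\<dots> = k x" unfolding k \<kappa>_def by simp
      finally show "k x = (\<Sum>b\<in>T. (\<lambda>x. k b * (if x = b then 1 else 0))) x" by simp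
    qed
    also have "\<dots> \<in> vs.span D"
      by (rule vs.span_sum, rule vs.span_scale, rule vs.span_base) (auto simp: D_def)
    finally show "k \<in> vs.span D" .
  qed
  have indep: "vs.independent (\<kappa> ` W)"
    unfolding vs.independent_explicit_module
  proof (intro allI impI)
    fix t u k assume t: "finite t" "t \<subseteq> \<kappa> ` W" and s: "(\<Sum>v\<in>t. (\<lambda>x. u v * v x)) = 0" and kt: "k \<in> t"
    have kF: "\<And>k. k \<in> t \<Longrightarrow> \<kappa> (Fm k) = k \<and> Fm k \<in> W"
    proof -
      fix k assume "k \<in> t"
      then obtain w where w: "w \<in> W" "k = \<kappa> w" using t(2) by blast
      have "Fm k = w" using Fk[OF w(1)] w(2) by simp
      thus "\<kappa> (Fm k) = k \<and> Fm k \<in> W" using w by simp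
    qed
    have inj: "inj_on Fm t" by (rule inj_on_inverseI[of _ \<kappa>]) (use kF in auto)
    have "(\<Sum>w\<in>Fm ` t. act w (\<phi> ((u \<circ> \<kappa>) w))) = (\<Sum>k\<in>t. act (Fm k) (\<phi> (u k)))"
      by (subst sum.reindex[OF inj]) (rule sum.cong, simp_all add: kF)
    also have "\<dots> = (\<Sum>k\<in>t. Fm (\<lambda>x. u k * k x))" by (simp add: Fm_scale)
    also have "\<dots> = Fm (\<Sum>k\<in>t. (\<lambda>x. u k * k x))" using Fm_sum[OF t(1)] by simp
    also have "\<dots> = 0" using s Fm_0 by simp
    finally have z: "(\<Sum>w\<in>Fm ` t. act w (\<phi> ((u \<circ> \<kappa>) w))) = 0" .
    have "Fm ` t \<subseteq> V" using kF WV by auto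
    hence "\<forall>w\<in>Fm ` t. (u \<circ> \<kappa>) w = 0" using ind z t(1) unfolding F_lin_indep_def by blast
    thus "u k = 0" using kt kF by force
  qed
  have "finite (\<kappa> ` W)" using vs.independent_span_bound[of D "\<kappa> ` W"] indep span Tfin(1) D_def by auto
  moreover have "inj_on \<kappa> W" by (rule inj_on_inverseI[of _ Fm]) (use Fk in auto)
  ultimately have "finite W" using finite_imageD by blast
  thus False using unc2 W_def countable_finite by auto
qed


locale twoside =
  fixes I :: "'r::ring_1 set"
  assumes I0: "0 \<in> I"
    and Iadd: "\<And>x y. x \<in> I \<Longrightarrow> y \<in> I \<Longrightarrow> x + y \<in> I"
    and Ineg: "\<And>x. x \<in> I \<Longrightarrow> - x \<in> I"
    and Ir: "\<And>x r. x \<in> I \<Longrightarrow> x * r \<in> I"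
    and Il: "\<And>x r. x \<in> I \<Longrightarrow> r * x \<in> I"
begin

lemma Idiff: "x \<in> I \<Longrightarrow> y \<in> I \<Longrightarrow> x - y \<in> I"
  using Iadd[of x "-y"] Ineg[of y] by (simp add: diff_conv_add_uminus del: add_uminus_conv_diff)

lemma Ilr: "x \<in> I \<Longrightarrow> r * x * s \<in> I"
  using Il Ir by blast

definition cg :: "'r \<Rightarrow> 'r \<Rightarrow> bool" (infix "\<approx>" 50) where
  "x \<approx> y \<longleftrightarrow> x - y \<in> I"

lemma cg_refl[simp, intro]: "x \<approx> x"
  by (simp add: cg_def I0)

lemma cg_sym: "x \<approx> y \<Longrightarrow> y \<approx> x"
  unfolding cg_def using Ineg[of "x - y"] by simp

lemma cg_trans[trans]: "x \<approx> y \<Longrightarrow> y \<approx> z \<Longrightarrow> x \<approx> z"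
  unfolding cg_def using Iadd[of "x - y" "y - z"] by simp

lemma cg_add: "x \<approx> x' \<Longrightarrow> y \<approx> y' \<Longrightarrow> x + y \<approx> x' + y'"
  unfolding cg_def using Iadd[of "x - x'" "y - y'"] by (simp add: algebra_simps)

lemma cg_diff: "x \<approx> x' \<Longrightarrow> y \<approx> y' \<Longrightarrow> x - y \<approx> x' - y'"
  unfolding cg_def using Idiff[of "x - x'" "y - y'"] by (simp add: algebra_simps)

lemma cg_ml: "y \<approx> y' \<Longrightarrow> r * y \<approx> r * y'"
  unfolding cg_def using Il[of "y - y'" r] by (simp add: algebra_simps)

lemma cg_mr: "y \<approx> y' \<Longrightarrow> y * r \<approx> y' * r"
  unfolding cg_def using Ir[of "y - y'" r] by (simp add: algebra_simps)

lemma cg_mult: "x \<approx> x' \<Longrightarrow> y \<approx> y' \<Longrightarrow> x * y \<approx> x' * y'"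
  using cg_trans[OF cg_mr[of x x' y] cg_ml[of y y' x']] by blast

lemma cg_I0: "i \<in> I \<Longrightarrow> i \<approx> 0"
  by (simp add: cg_def)

lemma cg_0I: "x \<approx> 0 \<Longrightarrow> x \<in> I"
  by (simp add: cg_def)

lemma cg_eq: "x = y \<Longrightarrow> x \<approx> y"
  by simp

lemma cg_by: "x - y = z \<Longrightarrow> z \<approx> 0 \<Longrightarrow> x \<approx> y"
  by (simp add: cg_def)

lemma cg_mem: "x \<approx> y \<Longrightarrow> y \<in> I \<Longrightarrow> x \<in> I"
  unfolding cg_def using Iadd[of "x - y" y] by simp

end

definition ichain :: "'r::ring_1 set \<Rightarrow> (nat \<Rightarrow> 'r) \<Rightarrow> bool" where
  "ichain I E \<longleftrightarrow> (\<forall>n. twoside.cg I (E n * E n) (E n)) \<and>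
     (\<forall>n. twoside.cg I (E n * E (Suc n)) (E n) \<and> twoside.cg I (E (Suc n) * E n) (E n)) \<and>
     (\<forall>n. \<not> twoside.cg I (E (Suc n)) (E n))"

context twoside
begin

lemma dcc_nochain:
  assumes dcc: "dcc_over I"
  shows "\<not> ichain I E"
proof
  assume ch: "ichain I E"
  have idem: "\<And>n. E n * E n \<approx> E n" and c1: "\<And>n. E n * E (Suc n) \<approx> E n"
    and c2: "\<And>n. E (Suc n) * E n \<approx> E n" and st: "\<And>n. \<not> E (Suc n) \<approx> E n"
    using ch unfolding ichain_def cg_def[abs_def] by auto
  define L where "L n = {(1 - E n) * r + i | r i. i \<in> I}" for n
  have rid: "\<And>n. rid (L n)"
  proof -
    fix n
    show "rid (L n)" unfolding rid_def
    proof (intro conjI ballI allI)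
      show "0 \<in> L n" unfolding L_def by (rule CollectI, rule exI[of _ 0], rule exI[of _ 0]) (simp add: I0)
      fix x assume "x \<in> L n"
      then obtain r i where x: "x = (1 - E n) * r + i" "i \<in> I" unfolding L_def by blast
      show "- x \<in> L n" unfolding L_def
        by (rule CollectI, rule exI[of _ "-r"], rule exI[of _ "-i"]) (use x(2) Ineg[of i] in \<open>simp add: x(1) algebra_simps\<close>)
      { fix s show "x * s \<in> L n" unfolding L_def
          by (rule CollectI, rule exI[of _ "r * s"], rule exI[of _ "i * s"]) (use x(2) Ir[of i s] in \<open>simp add: x(1) algebra_simps\<close>) }
      { fix y assume "y \<in> L n"
        then obtain r' i' where y: "y = (1 - E n) * r' + i'" "i' \<in> I" unfolding L_def by blast
        show "x + y \<in> L n" unfolding L_def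
          by (rule CollectI, rule exI[of _ "r + r'"], rule exI[of _ "i + i'"]) (use x(2) y(2) Iadd[of i i'] in \<open>simp add: x(1) y(1) algebra_simps\<close>) }
    qed
  qed
  have IL: "\<And>n. I \<subseteq> L n"
  proof
    fix n i assume "i \<in> I" then show "i \<in> L n" unfolding L_def by - (rule CollectI, rule exI[of _ 0], rule exI[of _ i], simp)
  qed
  have dec: "\<And>n. L (Suc n) \<subseteq> L n"
  proof
    fix n x assume "x \<in> L (Suc n)"
    then obtain r i where x: "x = (1 - E (Suc n)) * r + i" "i \<in> I" unfolding L_def by blast
    define a where "a = E n" define b where "b = E (Suc n)"
    have ab: "a * b - a \<in> I" using c1[of n] unfolding a_def b_def cg_def .
    have "(a - a * b) * r + i \<in> I" using Iadd[OF Ir[OF Ineg[OF ab]] x(2), of r] by (simp add: algebra_simps)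
    moreover have "x = (1 - a) * ((1 - b) * r) + ((a - a * b) * r + i)" using x(1) unfolding a_def b_def by (simp add: algebra_simps)
    ultimately show "x \<in> L n" unfolding L_def a_def by blast
  qed
  have "\<forall>n. rid (L n) \<and> I \<subseteq> L n \<and> L (Suc n) \<subseteq> L n" using rid IL dec by blast
  from mp[OF spec[OF dcc[unfolded dcc_over_def], of L] this] obtain N where N: "\<forall>n\<ge>N. L n = L N" ..
  have "L (Suc N) = L N" using N by (metis le_SucI order_refl)
  moreover have "1 - E N \<in> L N" unfolding L_def by (rule CollectI, rule exI[of _ 1], rule exI[of _ 0]) (simp add: I0)
  ultimately have "1 - E N \<in> L (Suc N)" by simp
  then obtain r i where e: "1 - E N = (1 - E (Suc N)) * r + i" "i \<in> I" unfolding L_def by blast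
  define a where "a = E N" define b where "b = E (Suc N)"
  have e': "1 - a = (1 - b) * r + i" unfolding a_def b_def by (rule e(1))
  have bb: "b * b \<approx> b" using idem unfolding b_def .
  have ba: "b * a \<approx> a" using c2 unfolding a_def b_def .
  have "(1 - b) * (1 - a) - (1 - a) = (b * b - b) * r - b * i"
    unfolding e' by (simp add: algebra_simps)
  moreover have "(b * b - b) * r - b * i \<approx> 0"
    using bb Il[OF e(2), of b] unfolding cg_def by (simp add: Idiff Ir)
  ultimately have h1: "(1 - b) * (1 - a) \<approx> 1 - a" by (rule cg_by)
  have "(1 - b) * (1 - a) = 1 - a - b + b * a" by (simp add: algebra_simps)
  also have "\<dots> \<approx> 1 - a - b + a" by (rule cg_add[OF cg_refl ba])
  also have "\<dots> = 1 - b" by simp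
  finally have h2: "(1 - b) * (1 - a) \<approx> 1 - b" .
  have "1 - b \<approx> 1 - a" using cg_trans[OF cg_sym[OF h2] h1] .
  hence "a \<approx> b" unfolding cg_def by (simp add: algebra_simps)
  hence "b \<approx> a" by (rule cg_sym)
  thus False using st[of N] unfolding a_def b_def by simp
qed

end


context twoside
begin

lemma P_step:
  assumes vnr: "\<forall>a::'r. \<exists>x. a = a * x * a" and L: "rid L"
    and eL: "e \<in> L" and ee: "e * e \<approx> e" and aL: "a \<in> L" and na: "\<not> a \<approx> e * a"
  shows "\<exists>g. g \<in> L \<and> g * g \<approx> g \<and> e * g \<approx> e \<and> g * e \<approx> e \<and> \<not> g \<approx> e"
proof -
  have Lmul: "\<And>x r. x \<in> L \<Longrightarrow> x * r \<in> L" using L unfolding rid_def by blast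
  have Ladd: "\<And>x y. x \<in> L \<Longrightarrow> y \<in> L \<Longrightarrow> x + y \<in> L" using L unfolding rid_def by blast
  define b where "b = a - e * a"
  have bL: "b \<in> L" unfolding b_def by (rule rid_diff[OF L aL Lmul[OF eL]])
  have bI: "b \<notin> I" using na unfolding b_def cg_def .
  obtain y where y: "b = b * y * b" using vnr by blast
  define f where "f = b * y"
  have fL: "f \<in> L" unfolding f_def by (rule Lmul[OF bL])
  have ff: "f * f = f" unfolding f_def by (metis y mult.assoc)
  have fb: "f * b = b" unfolding f_def using y by simp
  define p where "p = e * e - e"
  have pI: "p \<in> I" using ee unfolding p_def cg_def .
  have eb: "e * b = - (p * a)" unfolding b_def p_def by (simp add: algebra_simps)
  define q where "q = e * f"
  have "q = (e * b) * y" unfolding q_def f_def by (simp add: mult.assoc)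
  also have "\<dots> = (- (p * a)) * y" by (simp only: eb)
  finally have qI: "q \<in> I" using Ir[OF Ineg[OF Ir[OF pI, of a]], of y] by simp
  define g where "g = e + f - f * e"
  have gL: "g \<in> L" unfolding g_def
    using Ladd[OF eL fL] Lmul[OF fL, of e] rid_diff[OF L] by blast
  have c1: "g * e \<approx> e"
  proof (rule cg_by)
    show "g * e - e = p - f * p" unfolding g_def p_def by (simp add: algebra_simps)
    show "p - f * p \<approx> 0" by (rule cg_I0) (use pI Il in \<open>simp add: Idiff\<close>)
  qed
  have c2: "e * g \<approx> e"
  proof (rule cg_by)
    show "e * g - e = p + q - q * e" unfolding g_def p_def q_def by (simp add: algebra_simps)
    show "p + q - q * e \<approx> 0" by (rule cg_I0) (use pI qI Ir in \<open>simp add: Idiff Iadd\<close>)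
  qed
  have c3: "g * g \<approx> g"
  proof (rule cg_by)
    show "g * g - g = p + q - q * e + (f * f - f) - (f * f - f) * e - f * p - f * q + f * q * e"
      unfolding g_def p_def q_def by (simp add: algebra_simps)
    have "f * f - f = 0" using ff by simp
    moreover have "p + q - q * e - f * p - f * q + f * q * e \<in> I"
      using pI qI by (intro Idiff Iadd Ir Il)
    ultimately show "p + q - q * e + (f * f - f) - (f * f - f) * e - f * p - f * q + f * q * e \<approx> 0"
      by (intro cg_I0) (simp add: algebra_simps)
  qed
  have c4: "\<not> g \<approx> e"
  proof
    assume "g \<approx> e"
    hence h: "f - f * e \<in> I" unfolding cg_def g_def by (simp add: algebra_simps)
    have "f = (f - f * e) * f + f * q - (f * f - f)" unfolding q_def by (simp add: algebra_simps)
    also have "\<dots> = (f - f * e) * f + f * q" using ff by simp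
    finally have fe: "f = (f - f * e) * f + f * q" .
    have "(f - f * e) * f + f * q \<in> I" by (rule Iadd[OF Ir[OF h] Il[OF qI]])
    hence "f \<in> I" using fe by simp
    hence "f * b \<in> I" by (rule Ir)
    thus False using fb bI by simp
  qed
  show ?thesis using gL c1 c2 c3 c4 by blast
qed

lemma nochain_P:
  assumes vnr: "\<forall>a::'r. \<exists>x. a = a * x * a" and nc: "\<forall>E. \<not> ichain I E" and L: "rid L"
  shows "\<exists>e\<in>L. e * e \<approx> e \<and> (\<forall>x\<in>L. x \<approx> e * x)"
proof (rule ccontr)
  assume H: "\<not> (\<exists>e\<in>L. e * e \<approx> e \<and> (\<forall>x\<in>L. x \<approx> e * x))"
  define P where "P e g \<longleftrightarrow> g \<in> L \<and> g * g \<approx> g \<and> e * g \<approx> e \<and> g * e \<approx> e \<and> \<not> g \<approx> e" for e g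
  have step: "\<And>e. e \<in> L \<Longrightarrow> e * e \<approx> e \<Longrightarrow> \<exists>g. P e g"
  proof -
    fix e assume e: "e \<in> L" "e * e \<approx> e"
    then obtain a where "a \<in> L" "\<not> a \<approx> e * a" using H by blast
    thus "\<exists>g. P e g" unfolding P_def using P_step[OF vnr L e(1,2)] by blast
  qed
  define E where "E n = rec_nat 0 (\<lambda>_ e. SOME g. P e g) n" for n
  have E0: "E 0 = 0" unfolding E_def by simp
  have ES: "\<And>n. E (Suc n) = (SOME g. P (E n) g)" unfolding E_def by simp
  have inv: "\<And>n. E n \<in> L \<and> E n * E n \<approx> E n"
  proof -
    fix n show "E n \<in> L \<and> E n * E n \<approx> E n"
    proof (induction n)
      case 0 show ?case using L unfolding E0 rid_def by simp
    next
      case (Suc n)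
      have "P (E n) (E (Suc n))" unfolding ES by (rule someI_ex[OF step]) (use Suc in auto)
      thus ?case unfolding P_def by blast
    qed
  qed
  have PE: "\<And>n. P (E n) (E (Suc n))" unfolding ES by (rule someI_ex[OF step]) (use inv in auto)
  have "ichain I E" unfolding ichain_def cg_def[symmetric]
    using inv PE unfolding P_def by blast
  thus False using nc by blast
qed

end


context twoside
begin

lemma chain_step:
  assumes af: "a * f \<approx> a" and fa: "f * a \<approx> f" and aa: "a * a \<approx> a"
    and gg: "g * g \<approx> g" and fg: "f * g \<approx> f" and ngf: "\<not> g * f \<approx> g"
  defines "E' \<equiv> g + a - g * a"
  shows "E' * g \<approx> E'" "g * E' \<approx> g" "E' * E' \<approx> E'" "a * E' \<approx> a" "E' * a \<approx> a" "\<not> E' \<approx> a"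
proof -
  have ag: "a * g \<approx> a"
  proof -
    have "a * g \<approx> (a * f) * g" by (rule cg_mr[OF cg_sym[OF af]])
    also have "\<dots> = a * (f * g)" by (simp add: mult.assoc)
    also have "\<dots> \<approx> a * f" by (rule cg_ml[OF fg])
    also have "\<dots> \<approx> a" by (rule af)
    finally show ?thesis .
  qed
  have Eg: "E' * g \<approx> E'"
  proof -
    have "E' * g = g * g + a * g - g * (a * g)" unfolding E'_def by (simp add: algebra_simps)
    also have "\<dots> \<approx> g + a - g * a" by (rule cg_diff[OF cg_add[OF gg ag] cg_ml[OF ag]])
    finally show ?thesis unfolding E'_def .
  qed
  show "E' * g \<approx> E'" by (rule Eg)
  show "g * E' \<approx> g"
  proof -
    have "g * E' = g * g + g * a - (g * g) * a" unfolding E'_def by (simp add: algebra_simps)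
    also have "\<dots> \<approx> g + g * a - g * a" by (rule cg_diff[OF cg_add[OF gg cg_refl] cg_mr[OF gg]])
    also have "\<dots> = g" by simp
    finally show ?thesis .
  qed
  have Ea: "E' * a \<approx> a"
  proof -
    have "E' * a = g * a + a * a - g * (a * a)" unfolding E'_def by (simp add: algebra_simps)
    also have "\<dots> \<approx> g * a + a - g * a" by (rule cg_diff[OF cg_add[OF cg_refl aa] cg_ml[OF aa]])
    also have "\<dots> = a" by simp
    finally show ?thesis .
  qed
  show "E' * a \<approx> a" by (rule Ea)
  show "a * E' \<approx> a"
  proof -
    have "a * E' = a * g + a * a - (a * g) * a" unfolding E'_def by (simp add: algebra_simps)
    also have "\<dots> \<approx> a + a - a * a" by (rule cg_diff[OF cg_add[OF ag aa] cg_mr[OF ag]])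
    also have "\<dots> \<approx> a + a - a" by (rule cg_diff[OF cg_refl aa])
    also have "\<dots> = a" by simp
    finally show ?thesis .
  qed
  show "E' * E' \<approx> E'"
  proof -
    have "E' * E' = E' * g + E' * a - (E' * g) * a" unfolding E'_def by (simp add: algebra_simps)
    also have "\<dots> \<approx> E' + a - E' * a" by (rule cg_diff[OF cg_add[OF Eg Ea] cg_mr[OF Eg]])
    also have "\<dots> \<approx> E' + a - a" by (rule cg_diff[OF cg_refl Ea])
    also have "\<dots> = E'" by simp
    finally show ?thesis .
  qed
  show "\<not> E' \<approx> a"
  proof
    assume h: "E' \<approx> a"
    have gE: "g * E' \<approx> g"
    proof -
      have "g * E' = g * g + g * a - (g * g) * a" unfolding E'_def by (simp add: algebra_simps)
      also have "\<dots> \<approx> g + g * a - g * a" by (rule cg_diff[OF cg_add[OF gg cg_refl] cg_mr[OF gg]])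
      also have "\<dots> = g" by simp
      finally show ?thesis .
    qed
    have ga: "g * a \<approx> g" by (rule cg_trans[OF cg_ml[OF cg_sym[OF h]] gE])
    have "g * f \<approx> (g * a) * f" by (rule cg_mr[OF cg_sym[OF ga]])
    also have "\<dots> = g * (a * f)" by (simp add: mult.assoc)
    also have "\<dots> \<approx> g * a" by (rule cg_ml[OF af])
    also have "\<dots> \<approx> g" by (rule ga)
    finally show False using ngf by simp
  qed
qed

lemma nochain_dcc:
  assumes vnr: "\<forall>a::'r. \<exists>x. a = a * x * a" and nc: "\<forall>E. \<not> ichain I E"
  shows "dcc_over I"
  unfolding dcc_over_def
proof (intro allI impI)
  fix L :: "nat \<Rightarrow> 'r set" assume L: "\<forall>n. rid (L n) \<and> I \<subseteq> L n \<and> L (Suc n) \<subseteq> L n"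
  show "\<exists>N. \<forall>n\<ge>N. L n = L N"
  proof (rule ccontr)
    assume ns: "\<not> (\<exists>N. \<forall>n\<ge>N. L n = L N)"
    have anti: "\<And>n m. n \<le> m \<Longrightarrow> L m \<subseteq> L n"
    proof -
      fix n m :: nat assume "n \<le> m"
      thus "L m \<subseteq> L n"
      proof (induction m rule: dec_induct)
        case base show ?case by simp
      next
        case (step m) thus ?case using L by blast
      qed
    qed
    have ex: "\<And>k. \<exists>m. m > k \<and> L m \<noteq> L k"
    proof -
      fix k
      obtain m where "m \<ge> k" "L m \<noteq> L k" using ns by blast
      thus "\<exists>m. m > k \<and> L m \<noteq> L k" using le_neq_implies_less by blast
    qed
    define s where "s n = rec_nat 0 (\<lambda>_ k. SOME m. m > k \<and> L m \<noteq> L k) n" for n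
    have sS: "\<And>k. s (Suc k) > s k \<and> L (s (Suc k)) \<noteq> L (s k)"
    proof -
      fix k
      have "s (Suc k) = (SOME m. m > s k \<and> L m \<noteq> L (s k))" unfolding s_def by simp
      thus "s (Suc k) > s k \<and> L (s (Suc k)) \<noteq> L (s k)" using someI_ex[OF ex[of "s k"]] by simp
    qed
    define K where "K k = L (s k)" for k
    have Krid: "\<And>k. rid (K k)" and KI: "\<And>k. I \<subseteq> K k" using L unfolding K_def by auto
    have Kdec: "\<And>k. K (Suc k) \<subseteq> K k" unfolding K_def using anti sS less_imp_le by blast
    have Kne: "\<And>k. K (Suc k) \<noteq> K k" unfolding K_def using sS by blast
    have "\<forall>k. \<exists>e. e \<in> K k \<and> e * e \<approx> e \<and> (\<forall>x\<in>K k. x \<approx> e * x)"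
      using nochain_P[OF vnr nc Krid] by blast
    from choice[OF this] obtain e where e: "\<And>k. e k \<in> K k" "\<And>k. e k * e k \<approx> e k"
      "\<And>k x. x \<in> K k \<Longrightarrow> x \<approx> e k * x" by blast
    have ea: "\<And>k. e (Suc k) \<approx> e k * e (Suc k)" using e(1) e(3) Kdec by blast
    have eb: "\<And>k. \<not> e k \<approx> e (Suc k) * e k"
    proof
      fix k assume h: "e k \<approx> e (Suc k) * e k"
      have "K k \<subseteq> K (Suc k)"
      proof
        fix x assume x: "x \<in> K k"
        have "x \<approx> e k * x" by (rule e(3)[OF x])
        also have "\<dots> \<approx> (e (Suc k) * e k) * x" by (rule cg_mr[OF h])
        finally have c: "x - e (Suc k) * (e k * x) \<in> I" unfolding cg_def by (simp add: mult.assoc)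
        have m: "e (Suc k) * (e k * x) \<in> K (Suc k)" using Krid[of "Suc k"] e(1)[of "Suc k"] unfolding rid_def by blast
        have "(x - e (Suc k) * (e k * x)) + e (Suc k) * (e k * x) \<in> K (Suc k)"
          using Krid[of "Suc k"] KI[of "Suc k"] c m unfolding rid_def by blast
        thus "x \<in> K (Suc k)" by simp
      qed
      thus False using Kdec[of k] Kne[of k] by blast
    qed
    define f where "f k = 1 - e k" for k
    have ff: "\<And>k. f k * f k \<approx> f k"
    proof -
      fix k have "f k * f k - f k = e k * e k - e k" unfolding f_def by (simp add: algebra_simps)
      thus "f k * f k \<approx> f k" using e(2)[of k] unfolding cg_def by simp
    qed
    have fS: "\<And>k. f k * f (Suc k) \<approx> f k"
    proof -
      fix k have "f k * f (Suc k) - f k = e k * e (Suc k) - e (Suc k)" unfolding f_def by (simp add: algebra_simps)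
      moreover have "e k * e (Suc k) - e (Suc k) \<in> I" using cg_sym[OF ea[of k]] unfolding cg_def .
      ultimately show "f k * f (Suc k) \<approx> f k" unfolding cg_def by simp
    qed
    have nfS: "\<And>k. \<not> f (Suc k) * f k \<approx> f (Suc k)"
    proof
      fix k assume h: "f (Suc k) * f k \<approx> f (Suc k)"
      have "f (Suc k) * f k - f (Suc k) = e (Suc k) * e k - e k" unfolding f_def by (simp add: algebra_simps)
      hence "e (Suc k) * e k - e k \<in> I" using h unfolding cg_def by simp
      hence "e k \<approx> e (Suc k) * e k" using cg_sym unfolding cg_def by blast
      thus False using eb by blast
    qed
    define E where "E n = rec_nat (f 0) (\<lambda>k a. f (Suc k) + a - f (Suc k) * a) n" for n
    have E0: "E 0 = f 0" unfolding E_def by simp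
    have ES: "\<And>k. E (Suc k) = f (Suc k) + E k - f (Suc k) * E k" unfolding E_def by simp
    have inv: "\<And>k. E k * f k \<approx> E k \<and> f k * E k \<approx> f k \<and> E k * E k \<approx> E k"
    proof -
      fix k show "E k * f k \<approx> E k \<and> f k * E k \<approx> f k \<and> E k * E k \<approx> E k"
      proof (induction k)
        case 0 show ?case unfolding E0 using ff by blast
      next
        case (Suc k)
        have a: "E k * f k \<approx> E k" "f k * E k \<approx> f k" "E k * E k \<approx> E k" using Suc by auto
        note cs = chain_step[OF a ff[of "Suc k"] fS[of k] nfS[of k]]
        show ?case unfolding ES using cs(1-3) by blast
      qed
    qed
    have "ichain I E" unfolding ichain_def cg_def[symmetric]
    proof (intro conjI allI)
      fix n
      show "E n * E n \<approx> E n" using inv by blast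
      have a: "E n * f n \<approx> E n" "f n * E n \<approx> f n" "E n * E n \<approx> E n" using inv by auto
      note cs = chain_step[OF a ff[of "Suc n"] fS[of n] nfS[of n]]
      show "E n * E (Suc n) \<approx> E n" unfolding ES by (rule cs(4))
      show "E (Suc n) * E n \<approx> E n" unfolding ES by (rule cs(5))
      show "\<not> E (Suc n) \<approx> E n" unfolding ES by (rule cs(6))
    qed
    thus False using nc by blast
  qed
qed

end


lemma rid_gen:
  fixes G :: "'r::ring_1 set"
  shows "rid (right_ideal_gen G)" and "G \<subseteq> right_ideal_gen G"
    and "\<And>K. rid K \<Longrightarrow> G \<subseteq> K \<Longrightarrow> right_ideal_gen G \<subseteq> K"
proof -
  have U: "rid (UNIV :: 'r set)" unfolding rid_def by simp
  show "rid (right_ideal_gen G)" unfolding right_ideal_gen_def right_ideal_rot rid_def by blast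
  show "G \<subseteq> right_ideal_gen G" unfolding right_ideal_gen_def by blast
  show "\<And>K. rid K \<Longrightarrow> G \<subseteq> K \<Longrightarrow> right_ideal_gen G \<subseteq> K" unfolding right_ideal_gen_def right_ideal_rot by blast
qed

lemma P_inj:
  fixes I :: "'r::ring_1 set"
  assumes tw: "twoside I" and vnr: "\<forall>a::'r. \<exists>x. a = a * x * a"
    and P: "\<forall>L. rid L \<longrightarrow> (\<exists>e\<in>L. twoside.cg I (e * e) e \<and> (\<forall>x\<in>L. twoside.cg I x (e * x)))"
    and N: "right_module N act'" and ann: "\<forall>x\<in>N. \<forall>i\<in>I. act' x i = 0"
  shows "aleph0_injective N act'"
  unfolding aleph0_injective_def
proof (intro allI impI)
  interpret twoside I by (rule tw)
  fix J :: "'r set" and h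
  assume a: "countably_generated_right_ideal J \<and> rmod_hom J (*) N act' h"
  have J: "rid J" using a unfolding countably_generated_right_ideal_def right_ideal_rot by blast
  have hN: "\<And>x. x \<in> J \<Longrightarrow> h x \<in> N" and hadd: "\<And>x y. x \<in> J \<Longrightarrow> y \<in> J \<Longrightarrow> h (x + y) = h x + h y"
    and hmul: "\<And>x r. x \<in> J \<Longrightarrow> h (x * r) = act' (h x) r" using a unfolding rmod_hom_def by auto
  have Jmul: "\<And>x r. x \<in> J \<Longrightarrow> x * r \<in> J" using J unfolding rid_def by blast
  define L where "L = {j + i | j i. j \<in> J \<and> i \<in> I}"
  have L: "rid L" unfolding rid_def
  proof (intro conjI ballI allI)
    have "(0::'r) \<in> J" using J unfolding rid_def by blast
    thus "0 \<in> L" unfolding L_def by (rule_tac CollectI, rule_tac exI[of _ 0], rule_tac exI[of _ 0]) (simp add: I0)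
    fix x assume "x \<in> L"
    then obtain j i where x: "x = j + i" "j \<in> J" "i \<in> I" unfolding L_def by blast
    have "- j \<in> J" using J x(2) unfolding rid_def by blast
    hence "- j \<in> J \<and> - i \<in> I \<and> - x = - j + - i" using Ineg[OF x(3)] x(1) by simp
    thus "- x \<in> L" unfolding L_def by blast
    { fix r have "j * r \<in> J \<and> i * r \<in> I \<and> x * r = j * r + i * r" using Jmul[OF x(2)] Ir[OF x(3)] x(1) by (simp add: distrib_right)
      thus "x * r \<in> L" unfolding L_def by blast }
    { fix y assume "y \<in> L"
      then obtain j' i' where y: "y = j' + i'" "j' \<in> J" "i' \<in> I" unfolding L_def by blast
      have "x + y = (j + j') + (i + i')" using x y by (simp add: algebra_simps)
      moreover have "j + j' \<in> J" "i + i' \<in> I" using J x y Iadd unfolding rid_def by auto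
      ultimately show "x + y \<in> L" unfolding L_def by blast }
  qed
  obtain e where eL: "e \<in> L" and ex: "\<And>x. x \<in> L \<Longrightarrow> x \<approx> e * x" using P L by blast
  obtain j0 i0 where e: "e = j0 + i0" "j0 \<in> J" "i0 \<in> I" using eL unfolding L_def by blast
  have hz: "\<And>z. z \<in> J \<Longrightarrow> z \<in> I \<Longrightarrow> h z = 0"
  proof -
    fix z assume z: "z \<in> J" "z \<in> I"
    obtain y where y: "z = z * y * z" using vnr by blast
    have "h z = h (z * (y * z))" using y by (simp add: mult.assoc)
    also have "\<dots> = act' (h z) (y * z)" by (rule hmul[OF z(1)])
    also have "\<dots> = 0" using ann hN[OF z(1)] Il[OF z(2)] by blast
    finally show "h z = 0" .
  qed
  have key: "\<And>x. x \<in> J \<Longrightarrow> h x = act' (h j0) x"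
  proof -
    fix x assume x: "x \<in> J"
    have "x \<in> J \<and> 0 \<in> I \<and> x = x + 0" using x I0 by simp
    hence xL: "x \<in> L" unfolding L_def by blast
    have "x - e * x \<in> I" using ex[OF xL] unfolding cg_def .
    hence "(x - e * x) + i0 * x \<in> I" by (rule Iadd[OF _ Ir[OF e(3)]])
    hence d: "x - j0 * x \<in> I" unfolding e(1) by (simp add: algebra_simps)
    have j0x: "j0 * x \<in> J" by (rule Jmul[OF e(2)])
    have dJ: "x - j0 * x \<in> J" by (rule rid_diff[OF J x j0x])
    have "h x = h ((x - j0 * x) + j0 * x)" by simp
    also have "\<dots> = h (x - j0 * x) + h (j0 * x)" by (rule hadd[OF dJ j0x])
    also have "\<dots> = h (j0 * x)" using hz[OF dJ d] by simp
    also have "\<dots> = act' (h j0) x" by (rule hmul[OF e(2)])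
    finally show "h x = act' (h j0) x" .
  qed
  have hj0: "h j0 \<in> N" by (rule hN[OF e(2)])
  have "rmod_hom (UNIV :: 'r set) (*) N act' (\<lambda>r. act' (h j0) r)"
    unfolding rmod_hom_def using hj0 rm_closed[OF N] rm_radd[OF N] rm_mult[OF N] by auto
  thus "\<exists>g. rmod_hom (UNIV :: 'r set) (*) N act' g \<and> (\<forall>x\<in>J. g x = h x)" using key by auto
qed

lemma dsum_module:
  fixes M :: "'m::ab_group_add set" and act :: "'m \<Rightarrow> 'r::ring_1 \<Rightarrow> 'm" and \<Lambda> :: "'i set"
  assumes mod: "right_module M act"
  shows "right_module (dsum \<Lambda> M) (dsum_act act)"
proof -
  have fin: "\<And>f g :: 'i \<Rightarrow> 'm. finite {i. f i \<noteq> 0} \<Longrightarrow> finite {i. g i \<noteq> 0} \<Longrightarrow> finite {i. f i + g i \<noteq> 0}"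
  proof -
    fix f g :: "'i \<Rightarrow> 'm" assume a: "finite {i. f i \<noteq> 0}" and b: "finite {i. g i \<noteq> 0}"
    have "{i. f i + g i \<noteq> 0} \<subseteq> {i. f i \<noteq> 0} \<union> {i. g i \<noteq> 0}" by auto
    thus "finite {i. f i + g i \<noteq> 0}" using a b finite_subset by blast
  qed
  show ?thesis
  unfolding right_module_def dsum_def dsum_act_def
  proof (intro conjI ballI allI)
    show "0 \<in> {f. (\<forall>i. f i \<in> M) \<and> (\<forall>i. i \<notin> \<Lambda> \<longrightarrow> f i = 0) \<and> finite {i. f i \<noteq> 0}}"
      using rm_zero_closed[OF mod] by simp
    fix x assume x: "x \<in> {f. (\<forall>i. f i \<in> M) \<and> (\<forall>i. i \<notin> \<Lambda> \<longrightarrow> f i = 0) \<and> finite {i. f i \<noteq> 0}}"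
    show "- x \<in> {f. (\<forall>i. f i \<in> M) \<and> (\<forall>i. i \<notin> \<Lambda> \<longrightarrow> f i = 0) \<and> finite {i. f i \<noteq> 0}}"
      using x rm_neg_closed[OF mod] by simp
    show "(\<lambda>xa. act (x xa) 1) = x" using x rm_one[OF mod] by auto
    fix r
    show "(\<lambda>i. act (x i) r) \<in> {f. (\<forall>i. f i \<in> M) \<and> (\<forall>i. i \<notin> \<Lambda> \<longrightarrow> f i = 0) \<and> finite {i. f i \<noteq> 0}}"
    proof -
      have "{i. act (x i) r \<noteq> 0} \<subseteq> {i. x i \<noteq> 0}" using rm_l0[OF mod] by auto
      thus ?thesis using x rm_closed[OF mod] rm_l0[OF mod] finite_subset by auto
    qed
    { fix s show "(\<lambda>i. act (x i) (r + s)) = (\<lambda>i. act (x i) r) + (\<lambda>i. act (x i) s)"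
        using x rm_radd[OF mod] by (auto simp: fun_eq_iff) }
    { fix s show "(\<lambda>i. act (x i) (r * s)) = (\<lambda>i. act ((\<lambda>i. act (x i) r) i) s)"
        using x rm_mult[OF mod] by (auto simp: fun_eq_iff) }
    fix y assume y: "y \<in> {f. (\<forall>i. f i \<in> M) \<and> (\<forall>i. i \<notin> \<Lambda> \<longrightarrow> f i = 0) \<and> finite {i. f i \<noteq> 0}}"
    show "x + y \<in> {f. (\<forall>i. f i \<in> M) \<and> (\<forall>i. i \<notin> \<Lambda> \<longrightarrow> f i = 0) \<and> finite {i. f i \<noteq> 0}}"
      using x y rm_add_closed[OF mod] fin[of x y] by simp
    show "(\<lambda>i. act ((x + y) i) r) = (\<lambda>i. act (x i) r) + (\<lambda>i. act (y i) r)"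
      using x y rm_ladd[OF mod] by (auto simp: fun_eq_iff)
  qed
qed

lemma dsum_ann:
  assumes mod: "right_module M act"
  shows "\<forall>x\<in>dsum \<Lambda> M. \<forall>i\<in>Ann M act. dsum_act act x i = 0"
  unfolding dsum_def dsum_act_def Ann_def by (auto simp: fun_eq_iff)

lemma dsum_single:
  fixes act :: "'m::ab_group_add \<Rightarrow> 'r::ring_1 \<Rightarrow> 'm"
  assumes mod: "right_module M act" and inj: "aleph0_injective (dsum {i0} M) (dsum_act act)"
  shows "aleph0_injective M act"
  unfolding aleph0_injective_def
proof (intro allI impI)
  fix J :: "'r set" and h
  assume a: "countably_generated_right_ideal J \<and> rmod_hom J (*) M act h"
  define h' where "h' x = (\<lambda>i. if i = i0 then h x else 0)" for x
  have hom: "rmod_hom J (*) (dsum {i0} M) (dsum_act act) h'"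
    using a rm_zero_closed[OF mod] rm_l0[OF mod]
    unfolding rmod_hom_def h'_def dsum_def dsum_act_def by (auto simp: fun_eq_iff)
  obtain g where g: "rmod_hom (UNIV :: 'r set) (*) (dsum {i0} M) (dsum_act act) g" "\<forall>x\<in>J. g x = h' x"
    using inj a hom unfolding aleph0_injective_def by blast
  have "rmod_hom (UNIV :: 'r set) (*) M act (\<lambda>x. g x i0)"
    using g(1) unfolding rmod_hom_def dsum_def dsum_act_def by auto
  moreover have "\<forall>x\<in>J. g x i0 = h x" using g(2) unfolding h'_def by simp
  ultimately show "\<exists>g. rmod_hom (UNIV :: 'r set) (*) M act g \<and> (\<forall>x\<in>J. g x = h x)" by blast
qed


lemma cantor_nat_set: "\<not> countable (UNIV :: nat set set)"
proof
  assume "countable (UNIV :: nat set set)"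
  moreover have "(UNIV :: nat set set) \<noteq> {}" by simp
  ultimately obtain f :: "nat \<Rightarrow> nat set" where f: "range f = UNIV" using uncountable_def by blast
  then obtain m where m: "{n. n \<notin> f n} = f m" by (metis UNIV_I imageE)
  show False
  proof (cases "m \<in> f m")
    case True thus False using m by blast
  next
    case False thus False using m by blast
  qed
qed

definition pref :: "nat set \<Rightarrow> nat \<Rightarrow> bool list" where
  "pref A n = map (\<lambda>i. i \<in> A) [0..<n]"

definition fam :: "nat set \<Rightarrow> nat set" where
  "fam A = range (\<lambda>n. to_nat (pref A n))"

lemma fam_inf: "infinite (fam A)"
proof -
  have "inj (\<lambda>n. to_nat (pref A n))"
  proof (rule injI)
    fix x y assume "to_nat (pref A x) = to_nat (pref A y)"
    hence "pref A x = pref A y" by simp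
    hence "length (pref A x) = length (pref A y)" by simp
    thus "x = y" unfolding pref_def by simp
  qed
  thus ?thesis unfolding fam_def by (rule range_inj_infinite)
qed

lemma fam_int: "A \<noteq> B \<Longrightarrow> finite (fam A \<inter> fam B)"
proof -
  assume "A \<noteq> B"
  then obtain i where i: "(i \<in> A) \<noteq> (i \<in> B)" by blast
  have "fam A \<inter> fam B \<subseteq> (\<lambda>n. to_nat (pref A n)) ` {..i}"
  proof
    fix k assume "k \<in> fam A \<inter> fam B"
    then obtain n m where n: "k = to_nat (pref A n)" and m: "k = to_nat (pref B m)" unfolding fam_def by blast
    hence e: "pref A n = pref B m" by simp
    hence "length (pref A n) = length (pref B m)" by simp
    hence nm: "n = m" unfolding pref_def by simp
    have "n \<le> i"
    proof (rule ccontr)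
      assume "\<not> n \<le> i"
      hence "i < n" by simp
      hence "pref A n ! i = (i \<in> A)" "pref B m ! i = (i \<in> B)" unfolding pref_def using nm by simp_all
      thus False using e i by simp
    qed
    thus "k \<in> (\<lambda>n. to_nat (pref A n)) ` {..i}" using n by blast
  qed
  thus ?thesis using finite_subset by blast
qed

lemma sum_if_less:
  assumes "n \<le> (m::nat)"
  shows "(\<Sum>k<m. if k < n then g k else 0) = (\<Sum>k<n. g k)"
proof -
  have "(\<Sum>k<m. if k < n then g k else 0) = (\<Sum>k<m. if k \<in> {..<n} then g k else 0)" by simp
  also have "\<dots> = sum g ({..<m} \<inter> {..<n})" by (rule sum.inter_restrict[symmetric]) simp
  also have "{..<m} \<inter> {..<n} = {..<n}" using assms by auto
  finally show ?thesis .
qed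

lemma Ann_twoside:
  assumes mod: "right_module M act"
  shows "twoside (Ann M act)"
proof
  show "0 \<in> Ann M act" using rm_r0[OF mod] unfolding Ann_def by simp
  fix x assume x: "x \<in> Ann M act"
  show "- x \<in> Ann M act" using x rm_rneg[OF mod] unfolding Ann_def by simp
  { fix y assume "y \<in> Ann M act"
    thus "x + y \<in> Ann M act" using x rm_radd[OF mod] unfolding Ann_def by simp }
  { fix r show "x * r \<in> Ann M act" using x rm_mult[OF mod] rm_l0[OF mod] unfolding Ann_def by simp }
  { fix r show "r * x \<in> Ann M act" using x rm_mult[OF mod] rm_closed[OF mod] unfolding Ann_def by simp }
qed

context twoside
begin

lemma ichain_le:
  assumes ch: "ichain I E" and nm: "n \<le> m"
  shows "E n * E m \<approx> E n \<and> E m * E n \<approx> E n"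
  using nm
proof (induction m rule: dec_induct)
  have idem: "\<And>n. E n * E n \<approx> E n" using ch unfolding ichain_def cg_def[abs_def] by auto
  case base thus ?case using idem by blast
next
  have c1: "\<And>n. E n * E (Suc n) \<approx> E n" and c2: "\<And>n. E (Suc n) * E n \<approx> E n"
    using ch unfolding ichain_def cg_def[abs_def] by auto
  case (step m)
  have IH1: "E n * E m \<approx> E n" and IH2: "E m * E n \<approx> E n" using step by auto
  have "E n * E (Suc m) \<approx> (E n * E m) * E (Suc m)" by (rule cg_mr[OF cg_sym[OF IH1]])
  also have "\<dots> = E n * (E m * E (Suc m))" by (simp add: mult.assoc)
  also have "\<dots> \<approx> E n * E m" by (rule cg_ml[OF c1])
  also have "\<dots> \<approx> E n" by (rule IH1)
  finally have a: "E n * E (Suc m) \<approx> E n" .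
  have "E (Suc m) * E n \<approx> E (Suc m) * (E m * E n)" by (rule cg_ml[OF cg_sym[OF IH2]])
  also have "\<dots> = (E (Suc m) * E m) * E n" by (simp add: mult.assoc)
  also have "\<dots> \<approx> E m * E n" by (rule cg_mr[OF c2])
  also have "\<dots> \<approx> E n" by (rule IH2)
  finally show ?case using a by blast
qed

lemma ichain_uE:
  assumes ch: "ichain I E"
  shows "(E (Suc k) - E k) * E n \<approx> (if k < n then E (Suc k) - E k else 0)"
proof (cases "k < n")
  case True
  have "(E (Suc k) - E k) * E n = E (Suc k) * E n - E k * E n" by (simp add: algebra_simps)
  also have "\<dots> \<approx> E (Suc k) - E k"
    using ichain_le[OF ch, of "Suc k" n] ichain_le[OF ch, of k n] True by (intro cg_diff) auto
  finally show ?thesis using True by simp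
next
  case False
  have "(E (Suc k) - E k) * E n = E (Suc k) * E n - E k * E n" by (simp add: algebra_simps)
  also have "\<dots> \<approx> E n - E n"
    using ichain_le[OF ch, of n "Suc k"] ichain_le[OF ch, of n k] False by (intro cg_diff) auto
  finally show ?thesis using False by simp
qed

lemma ichain_uu:
  assumes ch: "ichain I E"
  shows "(E (Suc j) - E j) * (E (Suc k) - E k) \<approx> (if j = k then E (Suc j) - E j else 0)"
proof -
  have "(E (Suc j) - E j) * (E (Suc k) - E k) = (E (Suc j) - E j) * E (Suc k) - (E (Suc j) - E j) * E k"
    by (simp add: algebra_simps)
  also have "\<dots> \<approx> (if j < Suc k then E (Suc j) - E j else 0) - (if j < k then E (Suc j) - E j else 0)"
    by (rule cg_diff[OF ichain_uE[OF ch] ichain_uE[OF ch]])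
  also have "\<dots> = (if j = k then E (Suc j) - E j else 0)" by auto
  finally show ?thesis .
qed

end


lemma act_cg:
  assumes mod: "right_module M act" and x: "x \<in> M" and c: "twoside.cg (Ann M act) a b"
  shows "act x a = act x b"
proof -
  have "a - b \<in> Ann M act" using c unfolding twoside.cg_def[OF Ann_twoside[OF mod]] .
  hence "act x (a - b) = 0" using x unfolding Ann_def by blast
  thus ?thesis using rm_rdiff[OF mod x] by simp
qed

lemma act_nz:
  assumes mod: "right_module M act" and alg: "F_algebra \<phi>" and x: "x \<in> M" "x \<noteq> 0"
    and z: "act x (\<phi> c) = 0"
  shows "c = 0"
proof (rule ccontr)
  assume c: "c \<noteq> 0"
  have "x = act x 1" using rm_one[OF mod x(1)] by simp
  also have "\<dots> = act x (\<phi> (c * inverse c))" using c phi_one[OF alg] by simp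
  also have "\<dots> = act (act x (\<phi> c)) (\<phi> (inverse c))" using rm_mult[OF mod x(1)] phi_mult[OF alg] by simp
  also have "\<dots> = 0" using z rm_l0[OF mod] by simp
  finally show False using x(2) by simp
qed

context twoside
begin

lemma inj_nochain:
  fixes \<phi> :: "'f::field \<Rightarrow> 'r::ring_1" and M :: "'m::ab_group_add set" and act :: "'m \<Rightarrow> 'r \<Rightarrow> 'm"
  assumes mod: "right_module M act" and alg: "F_algebra \<phi>" and dim: "F_dim_le_aleph0 \<phi> M act"
    and inj: "aleph0_injective M act" and IA: "I = Ann M act"
  shows "\<not> ichain I E"
proof
  assume chI: "ichain I E"
  have idem: "\<And>n. E n * E n \<approx> E n" and c2: "\<And>n. E (Suc n) * E n \<approx> E n"
    and st: "\<And>n. \<not> E (Suc n) \<approx> E n" using chI unfolding ichain_def cg_def[abs_def] by auto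
  have actc: "\<And>x a b. x \<in> M \<Longrightarrow> a \<approx> b \<Longrightarrow> act x a = act x b"
    using act_cg[OF mod] unfolding IA by blast
  define u where "u k = E (Suc k) - E k" for k
  have uI: "\<And>k. u k \<notin> I" using st unfolding u_def cg_def by blast
  have "\<forall>k. \<exists>x. x \<in> M \<and> act x (u k) \<noteq> 0" using uI unfolding IA Ann_def by blast
  from choice[OF this] obtain w where w: "\<And>k. w k \<in> M" "\<And>k. act (w k) (u k) \<noteq> 0" by blast
  define z where "z k = act (w k) (u k)" for k
  have zM: "\<And>k. z k \<in> M" unfolding z_def using rm_closed[OF mod w(1)] by blast
  have znz: "\<And>k. z k \<noteq> 0" unfolding z_def by (rule w(2))
  have zE: "\<And>k n. act (z k) (E n) = (if k < n then z k else 0)"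
  proof -
    fix k n
    have "act (z k) (E n) = act (w k) (u k * E n)" unfolding z_def by (rule rm_mult[OF mod w(1), symmetric])
    also have "\<dots> = act (w k) (if k < n then u k else 0)"
      by (rule actc[OF w(1)]) (unfold u_def, rule ichain_uE[OF chI])
    also have "\<dots> = (if k < n then z k else 0)" unfolding z_def using rm_r0[OF mod w(1)] by simp
    finally show "act (z k) (E n) = (if k < n then z k else 0)" .
  qed
  have zu: "\<And>j k. act (z j) (u k) = (if j = k then z j else 0)"
  proof -
    fix j k
    have "act (z j) (u k) = act (w j) (u j * u k)" unfolding z_def by (rule rm_mult[OF mod w(1), symmetric])
    also have "\<dots> = act (w j) (if j = k then u j else 0)"
      by (rule actc[OF w(1)]) (unfold u_def, rule ichain_uu[OF chI])
    also have "\<dots> = (if j = k then z j else 0)" unfolding z_def using rm_r0[OF mod w(1)] by simp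
    finally show "act (z j) (u k) = (if j = k then z j else 0)" .
  qed
  define a where "a S n = (\<Sum>k<n. if k \<in> S then z k else 0)" for S :: "nat set" and n
  have termM: "\<And>S k. (if k \<in> S then z k else 0) \<in> M" using zM rm_zero_closed[OF mod] by simp
  have aM: "\<And>S n. a S n \<in> M"
  proof -
    fix S n
    have t: "\<And>k. k \<in> {..<n} \<Longrightarrow> (if k \<in> S then z k else 0) \<in> M" by (rule termM)
    show "a S n \<in> M" unfolding a_def by (rule conjunct2[OF rm_sum_l[OF mod t]])
  qed
  have asum: "\<And>S n r. act (a S n) r = (\<Sum>k<n. act (if k \<in> S then z k else 0) r)"
  proof -
    fix S n r
    have t: "\<And>k. k \<in> {..<n} \<Longrightarrow> (if k \<in> S then z k else 0) \<in> M" by (rule termM)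
    show "act (a S n) r = (\<Sum>k<n. act (if k \<in> S then z k else 0) r)" unfolding a_def by (rule conjunct1[OF rm_sum_l[OF mod t]])
  qed
  have aE: "\<And>S n m. n \<le> m \<Longrightarrow> act (a S m) (E n) = a S n"
  proof -
    fix S n m assume nm: "n \<le> (m::nat)"
    have "act (a S m) (E n) = (\<Sum>k<m. act (if k \<in> S then z k else 0) (E n))" by (rule asum)
    also have "\<dots> = (\<Sum>k<m. if k < n then (if k \<in> S then z k else 0) else 0)"
      by (rule sum.cong) (auto simp: zE rm_l0[OF mod])
    also have "\<dots> = a S n" unfolding a_def by (rule sum_if_less[OF nm])
    finally show "act (a S m) (E n) = a S n" .
  qed
  have up: "\<And>y n p. y \<approx> E n * y \<Longrightarrow> n \<le> p \<Longrightarrow> y \<approx> E p * y"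
  proof -
    fix y n p assume y: "y \<approx> E n * y" and np: "n \<le> (p::nat)"
    have "E p * y \<approx> E p * (E n * y)" by (rule cg_ml[OF y])
    also have "\<dots> = (E p * E n) * y" by (simp add: mult.assoc)
    also have "\<dots> \<approx> E n * y" using ichain_le[OF chI np] by (intro cg_mr) blast
    also have "\<dots> \<approx> y" by (rule cg_sym[OF y])
    finally show "y \<approx> E p * y" by (rule cg_sym)
  qed
  define S0 where "S0 = {y. \<exists>n. y \<approx> E n * y}"
  have S0rid: "rid S0" unfolding rid_def
  proof (intro conjI ballI allI)
    show "0 \<in> S0" unfolding S0_def by simp
    fix x assume "x \<in> S0"
    then obtain n where n: "x \<approx> E n * x" unfolding S0_def by blast
    have "- x \<approx> - (E n * x)" using cg_diff[OF cg_refl[of 0] n] by simp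
    thus "- x \<in> S0" unfolding S0_def by auto
    { fix r have "x * r \<approx> E n * x * r" by (rule cg_mr[OF n])
      thus "x * r \<in> S0" unfolding S0_def by (auto simp: mult.assoc) }
    { fix y assume "y \<in> S0"
      then obtain m where m: "y \<approx> E m * y" unfolding S0_def by blast
      have "x + y \<approx> E (max n m) * x + E (max n m) * y"
        by (rule cg_add[OF up[OF n] up[OF m]]) auto
      thus "x + y \<in> S0" unfolding S0_def by (auto simp: distrib_left) }
  qed
  have rangeS0: "range E \<subseteq> S0" unfolding S0_def using idem cg_sym by blast
  define J where "J = right_ideal_gen (range E)"
  have Jrid: "rid J" unfolding J_def by (rule rid_gen(1))
  have EJ: "\<And>n. E n \<in> J" unfolding J_def using rid_gen(2) by blast
  have JS0: "J \<subseteq> S0" unfolding J_def by (rule rid_gen(3)[OF S0rid rangeS0])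
  have JS: "\<And>y. y \<in> J \<Longrightarrow> \<exists>n. y \<approx> E n * y"
  proof -
    fix y assume "y \<in> J" hence "y \<in> S0" using JS0 by (rule subsetD[rotated])
    thus "\<exists>n. y \<approx> E n * y" unfolding S0_def by simp
  qed
  have cE: "countable (range E)" by simp
  have rE: "range E \<subseteq> J" using EJ by blast
  have Jcg: "countably_generated_right_ideal J"
    unfolding countably_generated_right_ideal_def right_ideal_rot
    by (rule conjI[OF Jrid], rule exI[of _ "range E"]) (use cE rE J_def in simp)
  have uJ: "\<And>k. u k \<in> J" unfolding u_def by (rule rid_diff[OF Jrid EJ EJ])
  have uS: "\<And>k. u k \<approx> E (Suc k) * u k"
  proof -
    fix k
    have "E (Suc k) * u k = E (Suc k) * E (Suc k) - E (Suc k) * E k" unfolding u_def by (simp add: algebra_simps)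
    also have "\<dots> \<approx> E (Suc k) - E k" by (rule cg_diff[OF idem c2])
    finally show "u k \<approx> E (Suc k) * u k" unfolding u_def by (rule cg_sym)
  qed
  define h where "h S y = act (a S (SOME n. y \<approx> E n * y)) y" for S y
  have stab: "\<And>S y n m. y \<in> J \<Longrightarrow> y \<approx> E n * y \<Longrightarrow> n \<le> m \<Longrightarrow> act (a S m) y = act (a S n) y"
  proof -
    fix S y n m assume yJ: "y \<in> J" and y: "y \<approx> E n * y" and nm: "n \<le> (m::nat)"
    have "act (a S m) y = act (a S m) (E n * y)" by (rule actc[OF aM y])
    also have "\<dots> = act (act (a S m) (E n)) y" by (rule rm_mult[OF mod aM])
    also have "\<dots> = act (a S n) y" using aE[OF nm] by simp
    finally show "act (a S m) y = act (a S n) y" .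
  qed
  have hval: "\<And>S y n. y \<in> J \<Longrightarrow> y \<approx> E n * y \<Longrightarrow> h S y = act (a S n) y"
  proof -
    fix S y n assume yJ: "y \<in> J" and y: "y \<approx> E n * y"
    define n0 where "n0 = (SOME n. y \<approx> E n * y)"
    have n0: "y \<approx> E n0 * y" unfolding n0_def by (rule someI_ex[OF JS[OF yJ]])
    have "h S y = act (a S n0) y" unfolding h_def n0_def ..
    also have "\<dots> = act (a S (max n n0)) y" by (rule stab[OF yJ n0, symmetric]) simp
    also have "\<dots> = act (a S n) y" by (rule stab[OF yJ y]) simp
    finally show "h S y = act (a S n) y" .
  qed
  have hom: "\<And>S. rmod_hom J (*) M act (h S)"
    unfolding rmod_hom_def
  proof (intro conjI ballI allI)
    fix S x assume xJ: "x \<in> J"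
    obtain n where n: "x \<approx> E n * x" using JS[OF xJ] by blast
    show "h S x \<in> M" unfolding hval[OF xJ n] by (rule rm_closed[OF mod aM])
    { fix r
      have xr: "x * r \<in> J" using Jrid xJ unfolding rid_def by blast
      have "x * r \<approx> E n * (x * r)" using cg_mr[OF n, of r] by (simp add: mult.assoc)
      hence "h S (x * r) = act (a S n) (x * r)" by (rule hval[OF xr])
      also have "\<dots> = act (act (a S n) x) r" by (rule rm_mult[OF mod aM])
      also have "\<dots> = act (h S x) r" unfolding hval[OF xJ n] ..
      finally show "h S (x * r) = act (h S x) r" . }
    { fix y assume yJ: "y \<in> J"
      obtain m where m: "y \<approx> E m * y" using JS[OF yJ] by blast
      define p where "p = max n m"
      have xp: "x \<approx> E p * x" and yp: "y \<approx> E p * y" unfolding p_def by (rule up[OF n], simp, rule up[OF m], simp)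
      have xy: "x + y \<in> J" using Jrid xJ yJ unfolding rid_def by blast
      have "x + y \<approx> E p * (x + y)" using cg_add[OF xp yp] by (simp add: distrib_left)
      hence "h S (x + y) = act (a S p) (x + y)" by (rule hval[OF xy])
      also have "\<dots> = act (a S p) x + act (a S p) y" by (rule rm_radd[OF mod aM])
      also have "\<dots> = h S x + h S y" using hval[OF xJ xp] hval[OF yJ yp] by simp
      finally show "h S (x + y) = h S x + h S y" . }
  qed
  have hu: "\<And>S k. h S (u k) = (if k \<in> S then z k else 0)"
  proof -
    fix S k
    have "h S (u k) = act (a S (Suc k)) (u k)" by (rule hval[OF uJ uS])
    also have "\<dots> = (\<Sum>j<Suc k. act (if j \<in> S then z j else 0) (u k))" by (rule asum)
    also have "\<dots> = (\<Sum>j<Suc k. if j = k then (if j \<in> S then z j else 0) else 0)"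
      by (rule sum.cong) (auto simp: zu rm_l0[OF mod])
    also have "\<dots> = (if k \<in> S then z k else 0)" by (subst sum.delta) auto
    finally show "h S (u k) = (if k \<in> S then z k else 0)" .
  qed
  have "\<forall>S. \<exists>m. m \<in> M \<and> (\<forall>k. act m (u k) = (if k \<in> S then z k else 0))"
  proof
    fix S
    obtain g where g: "rmod_hom (UNIV :: 'r set) (*) M act g" "\<forall>x\<in>J. g x = h S x"
      using inj Jcg hom unfolding aleph0_injective_def by blast
    have gM: "g 1 \<in> M" using g(1) unfolding rmod_hom_def by blast
    have "\<forall>k. act (g 1) (u k) = (if k \<in> S then z k else 0)"
    proof
      fix k
      have gm: "\<forall>x r. g (x * r) = act (g x) r" using g(1) unfolding rmod_hom_def by blast
      have "act (g 1) (u k) = g (1 * u k)" using spec[OF spec[OF gm, of 1], of "u k"] by (rule sym)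
      also have "\<dots> = h S (u k)" using g(2) uJ by simp
      finally show "act (g 1) (u k) = (if k \<in> S then z k else 0)" using hu by simp
    qed
    thus "\<exists>m. m \<in> M \<and> (\<forall>k. act m (u k) = (if k \<in> S then z k else 0))" using gM by blast
  qed
  from choice[OF this] obtain mS where mS: "\<And>S. mS S \<in> M" "\<And>S k. act (mS S) (u k) = (if k \<in> S then z k else 0)"
    by blast
  define V where "V = range (\<lambda>A. mS (fam A))"
  have VM: "V \<subseteq> M" unfolding V_def using mS(1) by blast
  have minj: "inj (\<lambda>A. mS (fam A))"
  proof (rule injI)
    fix A B assume e: "mS (fam A) = mS (fam B)"
    show "A = B"
    proof (rule ccontr)
      assume "A \<noteq> B"
      hence fin: "finite (fam A \<inter> fam B)" by (rule fam_int)
      have "infinite (fam A - (fam A \<inter> fam B))" using Diff_infinite_finite[OF fin fam_inf] .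
      then obtain k where k: "k \<in> fam A" "k \<notin> fam B" using infinite_imp_nonempty by blast
      have "act (mS (fam A)) (u k) = z k" using mS(2) k by simp
      moreover have "act (mS (fam B)) (u k) = 0" using mS(2) k by simp
      ultimately show False using e znz by simp
    qed
  qed
  have indep: "F_lin_indep \<phi> act V"
    unfolding F_lin_indep_def
  proof (intro allI impI ballI)
    fix T c b0 assume T: "finite T \<and> T \<subseteq> V \<and> (\<Sum>b\<in>T. act b (\<phi> (c b))) = 0" and b0: "b0 \<in> T"
    have TM: "\<And>b. b \<in> T \<Longrightarrow> b \<in> M" using T VM by blast
    have "\<forall>b\<in>T. \<exists>A. b = mS (fam A)" using T unfolding V_def by blast
    from bchoice[OF this] obtain Af where Af: "\<And>b. b \<in> T \<Longrightarrow> b = mS (fam (Af b))" by blast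
    define A0 where "A0 = Af b0"
    define R where "R = (\<Union>b\<in>T - {b0}. fam A0 \<inter> fam (Af b))"
    have Rfin: "finite R" unfolding R_def
    proof (rule finite_UN_I)
      show "finite (T - {b0})" using T by simp
      fix b assume b: "b \<in> T - {b0}"
      have "A0 \<noteq> Af b"
      proof
        assume "A0 = Af b"
        hence "b = b0" using Af[of b] Af[OF b0] b unfolding A0_def by simp
        thus False using b by simp
      qed
      thus "finite (fam A0 \<inter> fam (Af b))" by (rule fam_int)
    qed
    have "infinite (fam A0 - R)" by (rule Diff_infinite_finite[OF Rfin fam_inf])
    then obtain k where k: "k \<in> fam A0" "k \<notin> R" using infinite_imp_nonempty by blast
    have bu: "\<And>b. b \<in> T \<Longrightarrow> act b (u k) = (if b = b0 then z k else 0)"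
    proof -
      fix b assume b: "b \<in> T"
      show "act b (u k) = (if b = b0 then z k else 0)"
      proof (cases "b = b0")
        case True
        have "act b (u k) = act (mS (fam A0)) (u k)" using Af[OF b0] True unfolding A0_def by simp
        also have "\<dots> = z k" using mS(2) k(1) by simp
        finally show ?thesis using True by simp
      next
        case False
        have "k \<notin> fam (Af b)" using k b False unfolding R_def by blast
        hence "act (mS (fam (Af b))) (u k) = 0" using mS(2) by simp
        thus ?thesis using Af[OF b] False by simp
      qed
    qed
    have cl: "\<And>b. b \<in> T \<Longrightarrow> act b (\<phi> (c b)) \<in> M" using rm_closed[OF mod TM] by blast
    have "0 = act (\<Sum>b\<in>T. act b (\<phi> (c b))) (u k)" using T rm_l0[OF mod] by simp
    also have "\<dots> = (\<Sum>b\<in>T. act (act b (\<phi> (c b))) (u k))" by (rule conjunct1[OF rm_sum_l[OF mod cl]])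
    also have "\<dots> = (\<Sum>b\<in>T. if b = b0 then act (z k) (\<phi> (c b)) else 0)"
    proof (rule sum.cong)
      fix b assume b: "b \<in> T"
      have "act (act b (\<phi> (c b))) (u k) = act b (\<phi> (c b) * u k)" by (rule rm_mult[OF mod TM[OF b], symmetric])
      also have "\<dots> = act b (u k * \<phi> (c b))" using phi_central[OF alg] by simp
      also have "\<dots> = act (act b (u k)) (\<phi> (c b))" by (rule rm_mult[OF mod TM[OF b]])
      also have "\<dots> = (if b = b0 then act (z k) (\<phi> (c b)) else 0)" using bu[OF b] rm_l0[OF mod] by simp
      finally show "act (act b (\<phi> (c b))) (u k) = (if b = b0 then act (z k) (\<phi> (c b)) else 0)" .
    qed simp
    also have "\<dots> = act (z k) (\<phi> (c b0))" using T b0 by (subst sum.delta) auto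
    finally have "act (z k) (\<phi> (c b0)) = 0" by simp
    thus "c b0 = 0" by (rule act_nz[OF mod alg zM znz])
  qed
  have "countable V" by (rule indep_countable[OF mod alg dim VM indep])
  hence "countable (UNIV :: nat set set)"
    using countable_image_inj_on[of "\<lambda>A. mS (fam A)" UNIV] minj unfolding V_def by blast
  thus False using cantor_nat_set by blast
qed

end


theorem theorem3p5:
  fixes \<phi> :: "'f::field \<Rightarrow> 'r::ring_1"
    and M :: "'m::ab_group_add set"
    and act :: "'m \<Rightarrow> 'r \<Rightarrow> 'm"
  assumes vnr: "von_neumann_regular TYPE('r)"
    and alg: "F_algebra \<phi>"
    and mod: "right_module M act"
    and dim: "F_dim_le_aleph0 \<phi> M act"
  shows "(right_artinian (ring_of_type Quot Ann M act)
            \<longleftrightarrow> (\<forall>\<Lambda> :: 'i set. aleph0_injective (dsum \<Lambda> M) (dsum_act act)))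
       \<and> ((\<forall>\<Lambda> :: 'i set. aleph0_injective (dsum \<Lambda> M) (dsum_act act))
            \<longleftrightarrow> aleph0_injective M act)"
proof -
  define I where "I = Ann M act"
  have tw: "twoside I" unfolding I_def by (rule Ann_twoside[OF mod])
  have vnr': "\<forall>a::'r. \<exists>x. a = a * x * a" using vnr unfolding von_neumann_regular_def .
  have art: "right_artinian ((ring_of_type::'r ring) Quot Ann M act) \<longleftrightarrow> dcc_over I"
    unfolding I_def by (rule artinian_iff[OF Ann_ideal[OF mod]])
  have d2n: "dcc_over I \<Longrightarrow> \<forall>E. \<not> ichain I E" using twoside.dcc_nochain[OF tw] by blast
  have n2d: "(\<forall>E. \<not> ichain I E) \<Longrightarrow> dcc_over I" by (rule twoside.nochain_dcc[OF tw vnr'])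
  have n2all: "(\<forall>E. \<not> ichain I E) \<Longrightarrow> (\<forall>\<Lambda> :: 'i set. aleph0_injective (dsum \<Lambda> M) (dsum_act act))"
  proof
    fix \<Lambda> :: "'i set"
    assume nc: "\<forall>E. \<not> ichain I E"
    have P: "\<forall>L. rid L \<longrightarrow> (\<exists>e\<in>L. twoside.cg I (e * e) e \<and> (\<forall>x\<in>L. twoside.cg I x (e * x)))"
      using twoside.nochain_P[OF tw vnr' nc] by blast
    have ann: "\<forall>x\<in>dsum \<Lambda> M. \<forall>i\<in>I. dsum_act act x i = 0" unfolding I_def by (rule dsum_ann[OF mod])
    show "aleph0_injective (dsum \<Lambda> M) (dsum_act act)"
      by (rule P_inj[OF tw vnr' P dsum_module[OF mod] ann])
  qed
  have all2M: "(\<forall>\<Lambda> :: 'i set. aleph0_injective (dsum \<Lambda> M) (dsum_act act)) \<Longrightarrow> aleph0_injective M act"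
  proof -
    assume a: "\<forall>\<Lambda> :: 'i set. aleph0_injective (dsum \<Lambda> M) (dsum_act act)"
    have "aleph0_injective (dsum {undefined :: 'i} M) (dsum_act act)" using a by blast
    thus "aleph0_injective M act" by (rule dsum_single[OF mod])
  qed
  have M2n: "aleph0_injective M act \<Longrightarrow> \<forall>E. \<not> ichain I E"
    using twoside.inj_nochain[OF tw mod alg dim _ I_def] by blast
  show ?thesis using art d2n n2d n2all all2M M2n by blast
qed

end
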